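(* Let $G$ be an infinite locally finite graph, $D$ a finite connected graph, and $G'=G\square D$, where $G$ is identified with one of its copies $G\times\{x_0\}$ ($x_0\in V(D)$) in $G'$. Let $\alpha$ be an end of $G$ and $\alpha'$ the end of $G'$ with $\alpha\subseteq\alpha'$. Then $d(\alpha')=d(\alpha)\,|V(D)|$.
   Context: $\square$ denotes the Cartesian product. A ray is a one-way infinite path; two rays of a graph $H$ are equivalent in $H$ if for every finite $S\subseteq V(H)$ some component of $H-S$ contains tails of both; the classes are the ends of $H$. The degree $d(\alpha)$ of an end is the maximum number of pairwise vertex-disjoint rays in $\alpha$. *)

theory Defs
  imports Main "HOL-Library.Extended_Nat"
begin

definition graph :: "'a set \<Rightarrow> ('a \<Rightarrow> 'a \<Rightarrow> bool) \<Rightarrow> bool" where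
  "graph V E \<longleftrightarrow> (\<forall>x y. E x y \<longrightarrow> x \<in> V \<and> y \<in> V \<and> E y x \<and> x \<noteq> y)"

definition locally_finite :: "'a set \<Rightarrow> ('a \<Rightarrow> 'a \<Rightarrow> bool) \<Rightarrow> bool" where
  "locally_finite V E \<longleftrightarrow> (\<forall>x\<in>V. finite {y. E x y})"

definition conn_in :: "('a \<Rightarrow> 'a \<Rightarrow> bool) \<Rightarrow> 'a set \<Rightarrow> 'a \<Rightarrow> 'a \<Rightarrow> bool" where
  "conn_in E U x y \<longleftrightarrow> x \<in> U \<and> (\<lambda>a b. E a b \<and> a \<in> U \<and> b \<in> U)\<^sup>*\<^sup>* x y"

definition connected_graph :: "'a set \<Rightarrow> ('a \<Rightarrow> 'a \<Rightarrow> bool) \<Rightarrow> bool" where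
  "connected_graph V E \<longleftrightarrow> V \<noteq> {} \<and> (\<forall>x\<in>V. \<forall>y\<in>V. conn_in E V x y)"

definition ray :: "'a set \<Rightarrow> ('a \<Rightarrow> 'a \<Rightarrow> bool) \<Rightarrow> (nat \<Rightarrow> 'a) \<Rightarrow> bool" where
  "ray V E r \<longleftrightarrow> inj r \<and> (\<forall>i. r i \<in> V) \<and> (\<forall>i. E (r i) (r (Suc i)))"

definition ray_equiv :: "'a set \<Rightarrow> ('a \<Rightarrow> 'a \<Rightarrow> bool) \<Rightarrow> (nat \<Rightarrow> 'a) \<Rightarrow> (nat \<Rightarrow> 'a) \<Rightarrow> bool" where
  "ray_equiv V E r s \<longleftrightarrow>
     (\<forall>S. finite S \<and> S \<subseteq> V \<longrightarrow>
        (\<exists>n m. \<forall>i\<ge>n. \<forall>j\<ge>m. conn_in E (V - S) (r i) (s j)))"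

definition ends :: "'a set \<Rightarrow> ('a \<Rightarrow> 'a \<Rightarrow> bool) \<Rightarrow> (nat \<Rightarrow> 'a) set set" where
  "ends V E = {{s. ray V E s \<and> ray_equiv V E r s} | r. ray V E r}"

definition end_degree :: "(nat \<Rightarrow> 'a) set \<Rightarrow> enat" where
  "end_degree \<alpha> = (SUP R \<in> {R. finite R \<and> R \<subseteq> \<alpha> \<and>
        (\<forall>r\<in>R. \<forall>s\<in>R. r \<noteq> s \<longrightarrow> range r \<inter> range s = {})}. enat (card R))"

definition cart_V :: "'a set \<Rightarrow> 'b set \<Rightarrow> ('a \<times> 'b) set" where
  "cart_V VG VD = VG \<times> VD"

definition cart_E :: "('a \<Rightarrow> 'a \<Rightarrow> bool) \<Rightarrow> ('b \<Rightarrow> 'b \<Rightarrow> bool) \<Rightarrow> 'a \<times> 'b \<Rightarrow> 'a \<times> 'b \<Rightarrow> bool" where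
  "cart_E EG ED p q \<longleftrightarrow>
     (fst p = fst q \<and> ED (snd p) (snd q)) \<or> (snd p = snd q \<and> EG (fst p) (fst q))"

end

theory Submission
  imports Defs "HOL-Library.FuncSet"
begin
fun upto_first :: "'a set \<Rightarrow> 'a list \<Rightarrow> 'a list" where
  "upto_first X [] = []"
| "upto_first X (v # vs) = (if v \<in> X then [v] else v # upto_first X vs)"

fun from_last :: "'a set \<Rightarrow> 'a list \<Rightarrow> 'a list" where
  "from_last X [] = []"
| "from_last X (v # vs) = (if set vs \<inter> X \<noteq> {} then from_last X vs else v # vs)"

lemma uf_prefix: "\<exists>s. p = upto_first X p @ s"
  by (induction p) auto

lemma uf_set: "set (upto_first X p) \<subseteq> set p"
  by (induction p) auto

lemma uf_nonempty: "p \<noteq> [] \<Longrightarrow> upto_first X p \<noteq> []"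
  by (cases p) auto

lemma uf_Nil_iff[simp]: "upto_first X p = [] \<longleftrightarrow> p = []"
  by (cases p) auto

lemma uf_hd: "p \<noteq> [] \<Longrightarrow> hd (upto_first X p) = hd p"
  by (cases p) auto

lemma uf_last: "set p \<inter> X \<noteq> {} \<Longrightarrow> last (upto_first X p) \<in> X"
  by (induction p) (auto simp: uf_nonempty)

lemma uf_butlast: "set (butlast (upto_first X p)) \<inter> X = {}"
  by (induction p) auto

lemma uf_distinct: "distinct p \<Longrightarrow> distinct (upto_first X p)"
  using uf_prefix[of p X] by (metis distinct_append)

lemma uf_succ: "successively E p \<Longrightarrow> successively E (upto_first X p)"
  using uf_prefix[of p X] by (metis successively_append_iff)

lemma uf_comp: "Y \<subseteq> X \<Longrightarrow> upto_first X (upto_first Y p) = upto_first X p"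
  by (induction p) auto

lemma uf_F: "successively E p \<Longrightarrow> p \<noteq> [] \<Longrightarrow> hd p \<in> F \<Longrightarrow>
   set (upto_first (-F) p) \<subseteq> F \<union> {v. \<exists>u\<in>F. E u v}"
proof (induction p)
  case Nil then show ?case by simp
next
  case (Cons v vs)
  show ?case
  proof (cases vs)
    case Nil then show ?thesis using Cons by auto
  next
    case (Cons u us)
    have "E v u" using Cons \<open>successively E (v # vs)\<close> by simp
    show ?thesis
    proof (cases "u \<in> F")
      case True
      have "set (upto_first (-F) vs) \<subseteq> F \<union> {v. \<exists>u\<in>F. E u v}"
        using Cons.IH Cons.prems True \<open>vs = u # us\<close> by (auto simp: successively_Cons)
      then show ?thesis using Cons.prems by auto
    next
      case False
      then show ?thesis using Cons.prems \<open>E v u\<close> \<open>vs = u # us\<close> by auto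
    qed
  qed
qed

lemma fl_suffix: "\<exists>s. p = s @ from_last X p"
  by (induction p) (auto, metis append_Cons)

lemma fl_set: "set (from_last X p) \<subseteq> set p"
  using fl_suffix[of p X] by (metis Un_upper2 set_append)

lemma fl_nonempty: "set p \<inter> X \<noteq> {} \<Longrightarrow> from_last X p \<noteq> []"
  by (induction p) auto

lemma fl_hd: "set p \<inter> X \<noteq> {} \<Longrightarrow> hd (from_last X p) \<in> X"
  by (induction p) auto

lemma fl_tl: "set (tl (from_last X p)) \<inter> X = {}"
  by (induction p) auto

lemma fl_last: "set p \<inter> X \<noteq> {} \<Longrightarrow> last (from_last X p) = last p"
  by (induction p) (auto simp: fl_nonempty)

lemma fl_distinct: "distinct p \<Longrightarrow> distinct (from_last X p)"
  using fl_suffix[of p X] by (metis distinct_append)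

lemma fl_succ: "successively E p \<Longrightarrow> successively E (from_last X p)"
  using fl_suffix[of p X] by (metis successively_append_iff)

lemma succ_distinct_neq:
  "successively (\<lambda>a b. a = b \<or> E a b) l \<Longrightarrow> distinct l \<Longrightarrow> successively E l"
  by (induction l rule: induct_list012) auto

lemma walk_to_path:
  "successively (\<lambda>a b. a = b \<or> E a b) l \<Longrightarrow> l \<noteq> [] \<Longrightarrow>
   \<exists>p. distinct p \<and> successively E p \<and> p \<noteq> [] \<and> hd p = hd l \<and> last p = last l \<and> set p \<subseteq> set l"
proof (induction "length l" arbitrary: l rule: less_induct)
  case less
  show ?case
  proof (cases "distinct l")
    case True
    then show ?thesis using less.prems succ_distinct_neq by blast
  next
    case False
    then obtain xs y ys zs where l: "l = xs @ [y] @ ys @ [y] @ zs"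
      using not_distinct_decomp by blast
    define l' where "l' = xs @ [y] @ zs"
    have "successively (\<lambda>a b. a = b \<or> E a b) l'"
      using less.prems(1) unfolding l l'_def
      by (auto simp: successively_append_iff successively_Cons split: if_splits)
    moreover have "length l' < length l" unfolding l l'_def by simp
    moreover have "l' \<noteq> []" unfolding l'_def by simp
    ultimately obtain p where p: "distinct p \<and> successively E p \<and> p \<noteq> [] \<and> hd p = hd l' \<and> last p = last l' \<and> set p \<subseteq> set l'"
      using less.hyps by blast
    have "hd l' = hd l" unfolding l l'_def by (cases xs) auto
    moreover have "last l' = last l" unfolding l l'_def by (cases zs) auto
    moreover have "set l' \<subseteq> set l" unfolding l l'_def by auto
    ultimately show ?thesis using p by auto
  qed
qed

definition is_path :: "('a \<Rightarrow> 'a \<Rightarrow> bool) \<Rightarrow> 'a list \<Rightarrow> bool" where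
  "is_path E p \<longleftrightarrow> p \<noteq> [] \<and> distinct p \<and> successively E p"

definition ab_path :: "('a \<Rightarrow> 'a \<Rightarrow> bool) \<Rightarrow> 'a set \<Rightarrow> 'a set \<Rightarrow> 'a list \<Rightarrow> bool" where
  "ab_path E A B p \<longleftrightarrow> is_path E p \<and> hd p \<in> A \<and> last p \<in> B"

definition separates :: "('a \<Rightarrow> 'a \<Rightarrow> bool) \<Rightarrow> 'a set \<Rightarrow> 'a set \<Rightarrow> 'a set \<Rightarrow> bool" where
  "separates E A B T \<longleftrightarrow> (\<forall>p. ab_path E A B p \<longrightarrow> set p \<inter> T \<noteq> {})"

definition disj_sys :: "'a list set \<Rightarrow> bool" where
  "disj_sys P \<longleftrightarrow> (\<forall>p\<in>P. \<forall>q\<in>P. p \<noteq> q \<longrightarrow> set p \<inter> set q = {})"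

lemma succ_del:
  "successively E p \<Longrightarrow> \<not> successively (\<lambda>u v. E u v \<and> (u, v) \<noteq> (y, x)) p \<Longrightarrow>
   \<exists>l1 l2. p = l1 @ y # x # l2"
proof (induction p rule: induct_list012)
  case (3 a b zs)
  show ?case
  proof (cases "(a, b) = (y, x)")
    case True
    then have "a = y" "b = x" by simp_all
    then have "a # b # zs = [] @ y # x # zs" by simp
    then show ?thesis by blast
  next
    case False
    have "successively E (b # zs)" using "3.prems"(1) by simp
    moreover have "\<not> successively (\<lambda>u v. E u v \<and> (u, v) \<noteq> (y, x)) (b # zs)"
      using "3.prems" False by auto
    ultimately obtain l1 l2 where "b # zs = l1 @ y # x # l2" using "3.IH"(2) by blast
    then have "a # b # zs = (a # l1) @ y # x # l2" by simp
    then show ?thesis by blast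
  qed
qed simp_all

lemma disj_hd_inj:
  assumes "disj_sys P" "p \<in> P" "q \<in> P" "p \<noteq> []" "q \<noteq> []" "hd p = hd q" shows "p = q"
proof (rule ccontr)
  assume "p \<noteq> q"
  then have "set p \<inter> set q = {}" using assms(1-3) unfolding disj_sys_def by blast
  moreover have "hd p \<in> set p" "hd q \<in> set q" using assms(4,5) by simp_all
  ultimately show False using assms(6) by auto
qed

lemma disj_last_inj:
  assumes "disj_sys P" "p \<in> P" "q \<in> P" "p \<noteq> []" "q \<noteq> []" "last p = last q" shows "p = q"
proof (rule ccontr)
  assume "p \<noteq> q"
  then have "set p \<inter> set q = {}" using assms(1-3) unfolding disj_sys_def by blast
  moreover have "last p \<in> set p" "last q \<in> set q" using assms(4,5) by simp_all
  ultimately show False using assms(6) by auto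
qed

lemma sep_del:
  assumes "separates (\<lambda>u v. E u v \<and> (u, v) \<noteq> (y, x)) A B S"
  shows "separates E A B (S \<union> {y})" "separates E A B (S \<union> {x})"
proof -
  let ?E' = "\<lambda>u v. E u v \<and> (u, v) \<noteq> (y, x)"
  have *: "set p \<inter> S \<noteq> {} \<or> (y \<in> set p \<and> x \<in> set p)" if p: "ab_path E A B p" for p
  proof (cases "successively ?E' p")
    case True
    then have "ab_path ?E' A B p" using p unfolding ab_path_def is_path_def by blast
    moreover have "\<forall>p. ab_path ?E' A B p \<longrightarrow> set p \<inter> S \<noteq> {}" using assms unfolding separates_def .
    ultimately show ?thesis by blast
  next
    case False
    have "successively E p" using p unfolding ab_path_def is_path_def by blast
    then obtain l1 l2 where "p = l1 @ y # x # l2"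
      using succ_del[OF _ False] by blast
    then show ?thesis by auto
  qed
  show "separates E A B (S \<union> {y})" unfolding separates_def
  proof (intro allI impI)
    fix p assume "ab_path E A B p" then show "set p \<inter> (S \<union> {y}) \<noteq> {}" using *[of p] by auto
  qed
  show "separates E A B (S \<union> {x})" unfolding separates_def
  proof (intro allI impI)
    fix p assume "ab_path E A B p" then show "set p \<inter> (S \<union> {x}) \<noteq> {}" using *[of p] by auto
  qed
qed

lemma is_path_mono: "is_path E p \<Longrightarrow> (\<And>u v. E u v \<Longrightarrow> E2 u v) \<Longrightarrow> is_path E2 p"
  unfolding is_path_def using successively_mono by blast

lemma set_tl_sub: "x \<in> set (tl xs) \<Longrightarrow> x \<in> set xs"
  by (cases xs) auto

lemma set_butlast_last: "p \<noteq> [] \<Longrightarrow> set p = insert (last p) (set (butlast p))"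
  by (induction p) auto

lemma menger_base:
  assumes "\<forall>u v. \<not> E u v" "finite A"
    and sep: "\<forall>T. finite T \<longrightarrow> separates E A B T \<longrightarrow> k \<le> card T"
  shows "\<exists>P. finite P \<and> card P = k \<and> (\<forall>p\<in>P. ab_path E A B p) \<and> disj_sys P"
proof -
  have "separates E A B (A \<inter> B)"
    unfolding separates_def ab_path_def is_path_def
  proof (intro allI impI)
    fix p assume p: "(p \<noteq> [] \<and> distinct p \<and> successively E p) \<and> hd p \<in> A \<and> last p \<in> B"
    then obtain a where "p = [a]" using assms(1)
      by (cases p rule: list.exhaust) (auto simp: successively_Cons)
    then show "set p \<inter> (A \<inter> B) \<noteq> {}" using p by auto
  qed
  then have "k \<le> card (A \<inter> B)" using sep assms(2) by auto
  then obtain C where C: "C \<subseteq> A \<inter> B" "card C = k" "finite C" by (rule obtain_subset_with_card_n)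
  define P where "P = (\<lambda>a. [a]) ` C"
  have "card P = k" unfolding P_def using C by (simp add: card_image inj_on_def)
  moreover have "finite P" unfolding P_def using C by simp
  moreover have "\<forall>p\<in>P. ab_path E A B p" unfolding P_def ab_path_def is_path_def using C by auto
  moreover have "disj_sys P" unfolding P_def disj_sys_def by auto
  ultimately show ?thesis by blast
qed

lemma menger_n:
  "\<forall>E A B k. card {(u,v). E u v} = n \<longrightarrow> finite {(u,v). E u v} \<longrightarrow> (\<forall>v. \<not> E v v) \<longrightarrow> finite A \<longrightarrow>
   (\<forall>T. finite T \<longrightarrow> separates E A B T \<longrightarrow> k \<le> card T) \<longrightarrow>
   (\<exists>P. finite P \<and> card P = k \<and> (\<forall>p\<in>P. ab_path E A B p) \<and> disj_sys P)"
proof (induction n rule: less_induct)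
  case (less n)
  show ?case
  proof (intro allI impI)
  fix E :: "'a \<Rightarrow> 'a \<Rightarrow> bool" and A B k
  assume n: "card {(u,v). E u v} = n" and p1: "finite {(u,v). E u v}" and p2: "\<forall>v. \<not> E v v"
    and p3: "finite A" and p4: "\<forall>T. finite T \<longrightarrow> separates E A B T \<longrightarrow> k \<le> card T"
  note prems = p1 p2 p3 p4
  show "\<exists>P. finite P \<and> card P = k \<and> (\<forall>p\<in>P. ab_path E A B p) \<and> disj_sys P"
  proof (cases "\<forall>u v. \<not> E u v")
    case True
    from menger_base[OF True prems(3) prems(4)] show ?thesis .
  next
    case False
    then obtain y x where yx: "E y x" by blast
    define E' where "E' = (\<lambda>u v. E u v \<and> (u, v) \<noteq> (y, x))"
    have E'E: "\<And>u v. E' u v \<Longrightarrow> E u v" unfolding E'_def by auto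
    have setE': "{(u,v). E' u v} = {(u,v). E u v} - {(y,x)}" unfolding E'_def by auto
    have lessE: "card {(u,v). E' u v} < card {(u,v). E u v}"
    proof -
      have "(y,x) \<in> {(u,v). E u v}" using yx by simp
      then show ?thesis unfolding setE' by (rule card_Diff1_less[OF prems(1)])
    qed
    have finE': "finite {(u,v). E' u v}" unfolding setE' using prems(1) by simp
    have irrE': "\<forall>v. \<not> E' v v" using prems(2) E'E by blast
    have IH: "\<And>A B k. finite A \<Longrightarrow> (\<forall>T. finite T \<longrightarrow> separates E' A B T \<longrightarrow> k \<le> card T) \<Longrightarrow>
       \<exists>P. finite P \<and> card P = k \<and> (\<forall>p\<in>P. ab_path E' A B p) \<and> disj_sys P"
    proof -
      fix A B k assume a: "finite A" "\<forall>T. finite T \<longrightarrow> separates E' A B T \<longrightarrow> k \<le> card T"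
      have "card {(u,v). E' u v} < n" using lessE n by simp
      note h = less.IH[OF this, THEN spec[of _ E'], THEN spec[of _ A], THEN spec[of _ B], THEN spec[of _ k]]
      show "\<exists>P. finite P \<and> card P = k \<and> (\<forall>p\<in>P. ab_path E' A B p) \<and> disj_sys P"
        using mp[OF mp[OF mp[OF mp[OF mp[OF h refl] finE'] irrE'] a(1)] a(2)] .
    qed
    show ?thesis
    proof (cases "\<forall>T. finite T \<longrightarrow> separates E' A B T \<longrightarrow> k \<le> card T")
      case True
      obtain P where P: "finite P" "card P = k" "\<forall>p\<in>P. ab_path E' A B p" "disj_sys P"
        using IH[OF prems(3) True] by auto
      have mono: "is_path E' p \<Longrightarrow> is_path E p" for p using is_path_mono[OF _ E'E] .
      have "\<forall>p\<in>P. ab_path E A B p"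
      proof
        fix p assume "p \<in> P"
        then have "ab_path E' A B p" using P(3) by simp
        then show "ab_path E A B p" unfolding ab_path_def using mono by simp
      qed
      then show ?thesis using P(1,2,4) by auto
    next
      case False
      then obtain S where S: "finite S" "separates E' A B S" "card S < k" by force
      have sy: "separates E A B (S \<union> {y})" and sx: "separates E A B (S \<union> {x})"
        using sep_del[of E y x A B S] S(2) unfolding E'_def by simp_all
      have ky: "k \<le> card (S \<union> {y})" using sy prems(4) S(1) by simp
      have yS: "y \<notin> S"
      proof
        assume "y \<in> S" then have "S \<union> {y} = S" by auto
        then show False using ky S(3) by simp
      qed
      have cy: "card (S \<union> {y}) = k"
      proof -
        have "card (S \<union> {y}) = Suc (card S)" using yS S(1) by simp
        then show ?thesis using ky S(3) by linarith
      qed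
      have kx: "k \<le> card (S \<union> {x})" using sx prems(4) S(1) by simp
      have xS: "x \<notin> S"
      proof
        assume "x \<in> S" then have "S \<union> {x} = S" by auto
        then show False using kx S(3) by simp
      qed
      have cx: "card (S \<union> {x}) = k"
      proof -
        have "card (S \<union> {x}) = Suc (card S)" using xS S(1) by simp
        then show ?thesis using kx S(3) by linarith
      qed
      have xy: "x \<noteq> y" using yx prems(2) by auto
      define XA where "XA = S \<union> {y}"
      define XB where "XB = S \<union> {x}"
      have sepA: "\<forall>T. finite T \<longrightarrow> separates E' A XA T \<longrightarrow> k \<le> card T"
      proof (intro allI impI)
        fix T assume T: "finite T" "separates E' A XA T"
        have "separates E A B T" unfolding separates_def
        proof (intro allI impI)
          fix p assume p: "ab_path E A B p"
          have "set p \<inter> XA \<noteq> {}" using sy p unfolding separates_def XA_def by blast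
          define p1 where "p1 = upto_first XA p"
          have p1ne: "p1 \<noteq> []" using p unfolding p1_def ab_path_def is_path_def by simp
          have "successively E' p1"
          proof (rule ccontr)
            assume "\<not> successively E' p1"
            moreover have "successively E p1" using p unfolding p1_def ab_path_def is_path_def
              using uf_succ by blast
            ultimately obtain l1 l2 where "p1 = l1 @ y # x # l2" using succ_del[of E p1 y x] unfolding E'_def by blast
            then have "y \<in> set (butlast p1)" by (simp add: butlast_append)
            then show False using uf_butlast[of XA p] unfolding p1_def XA_def by auto
          qed
          then have "ab_path E' A XA p1"
            using p p1ne uf_last[OF \<open>set p \<inter> XA \<noteq> {}\<close>] uf_hd[of p XA] uf_distinct[of p XA]
            unfolding ab_path_def is_path_def p1_def by auto
          then have "set p1 \<inter> T \<noteq> {}" using T(2) unfolding separates_def by blast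
          then show "set p \<inter> T \<noteq> {}" using uf_set[of XA p] unfolding p1_def by blast
        qed
        then show "k \<le> card T" using prems(4) T(1) by blast
      qed
      have sepB: "\<forall>T. finite T \<longrightarrow> separates E' XB B T \<longrightarrow> k \<le> card T"
      proof (intro allI impI)
        fix T assume T: "finite T" "separates E' XB B T"
        have "separates E A B T" unfolding separates_def
        proof (intro allI impI)
          fix p assume p: "ab_path E A B p"
          have X: "set p \<inter> XB \<noteq> {}" using sx p unfolding separates_def XB_def by blast
          define p1 where "p1 = from_last XB p"
          have p1ne: "p1 \<noteq> []" using fl_nonempty[OF X] unfolding p1_def by simp
          have "successively E' p1"
          proof (rule ccontr)
            assume "\<not> successively E' p1"
            moreover have "successively E p1" using p unfolding p1_def ab_path_def is_path_def
              using fl_succ by blast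
            ultimately obtain l1 l2 where "p1 = l1 @ y # x # l2" using succ_del[of E p1 y x] unfolding E'_def by blast
            then have "x \<in> set (tl p1)" by (cases l1) auto
            then show False using fl_tl[of XB p] unfolding p1_def XB_def by auto
          qed
          then have "ab_path E' XB B p1"
            using p p1ne fl_hd[OF X] fl_last[OF X] fl_distinct[of p XB]
            unfolding ab_path_def is_path_def p1_def by auto
          then have "set p1 \<inter> T \<noteq> {}" using T(2) unfolding separates_def by blast
          then show "set p \<inter> T \<noteq> {}" using fl_set[of XB p] unfolding p1_def by blast
        qed
        then show "k \<le> card T" using prems(4) T(1) by blast
      qed
      obtain P where P: "finite P" "card P = k" "\<forall>p\<in>P. ab_path E' A XA p" "disj_sys P"
        using IH[OF prems(3) sepA] by blast
      obtain Q where Q: "finite Q" "card Q = k" "\<forall>p\<in>Q. ab_path E' XB B p" "disj_sys Q"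
        using IH[of XB B k] sepB unfolding XB_def using S(1) by blast
      define P' where "P' = upto_first XA ` P"
      define Q' where "Q' = from_last XB ` Q"
      have finXA: "finite XA" "card XA = k" unfolding XA_def using S(1) cy by simp_all
      have finXB: "finite XB" "card XB = k" unfolding XB_def using S(1) cx by simp_all
      have Pp: "is_path E' p \<and> hd p \<in> A \<and> last p \<in> XA \<and> set (butlast p) \<inter> XA = {}" if "p \<in> P'" for p
      proof -
        obtain p0 where p0: "p0 \<in> P" "p = upto_first XA p0" using \<open>p \<in> P'\<close> unfolding P'_def by blast
        have a: "ab_path E' A XA p0" using P(3) p0(1) by blast
        then have "set p0 \<inter> XA \<noteq> {}" unfolding ab_path_def is_path_def using last_in_set by blast
        then show ?thesis using a uf_last[of p0 XA] uf_butlast[of XA p0] uf_hd[of p0 XA] uf_distinct[of p0 XA]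
            uf_succ[of E' p0 XA] unfolding p0(2) ab_path_def is_path_def by auto
      qed
      have Qp: "is_path E' q \<and> hd q \<in> XB \<and> last q \<in> B \<and> set (tl q) \<inter> XB = {}" if "q \<in> Q'" for q
      proof -
        obtain q0 where q0: "q0 \<in> Q" "q = from_last XB q0" using \<open>q \<in> Q'\<close> unfolding Q'_def by blast
        have a: "ab_path E' XB B q0" using Q(3) q0(1) by blast
        then have X: "set q0 \<inter> XB \<noteq> {}" unfolding ab_path_def is_path_def using hd_in_set by blast
        then show ?thesis using a fl_hd[OF X] fl_last[OF X] fl_tl[of XB q0] fl_nonempty[OF X] fl_distinct[of q0 XB]
            fl_succ[of E' q0 XB] unfolding q0(2) ab_path_def is_path_def by auto
      qed
      have injP: "inj_on (upto_first XA) P"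
      proof (rule inj_onI)
        fix p q assume pq: "p \<in> P" "q \<in> P" "upto_first XA p = upto_first XA q"
        have ne: "p \<noteq> []" "q \<noteq> []" using pq P(3) unfolding ab_path_def is_path_def by auto
        have "hd p = hd q" using pq(3) uf_hd[OF ne(1), of XA] uf_hd[OF ne(2), of XA] by simp
        then show "p = q" using disj_hd_inj[OF P(4) pq(1,2) ne] by simp
      qed
      have injQ: "inj_on (from_last XB) Q"
      proof (rule inj_onI)
        fix p q assume pq: "p \<in> Q" "q \<in> Q" "from_last XB p = from_last XB q"
        have ne: "p \<noteq> []" "q \<noteq> []" using pq Q(3) unfolding ab_path_def is_path_def by auto
        have Xp: "set p \<inter> XB \<noteq> {}" using Q(3) pq(1) hd_in_set[OF ne(1)] unfolding ab_path_def by auto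
        have Xq: "set q \<inter> XB \<noteq> {}" using Q(3) pq(2) hd_in_set[OF ne(2)] unfolding ab_path_def by auto
        have "last p = last q" using fl_last[OF Xp] fl_last[OF Xq] pq(3) by simp
        then show "p = q" using disj_last_inj[OF Q(4) pq(1,2) ne] by simp
      qed
      have cP': "card P' = k" "finite P'" unfolding P'_def using card_image[OF injP] P(1,2) by simp_all
      have cQ': "card Q' = k" "finite Q'" unfolding Q'_def using card_image[OF injQ] Q(1,2) by simp_all
      have dP': "disj_sys P'" unfolding disj_sys_def
      proof (intro ballI impI)
        fix p q assume "p \<in> P'" "q \<in> P'" "p \<noteq> q"
        then obtain p0 q0 where "p0 \<in> P" "q0 \<in> P" "p = upto_first XA p0" "q = upto_first XA q0" "p0 \<noteq> q0"
          unfolding P'_def by blast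
        then show "set p \<inter> set q = {}" using P(4) uf_set[of XA p0] uf_set[of XA q0] unfolding disj_sys_def by blast
      qed
      have dQ': "disj_sys Q'" unfolding disj_sys_def
      proof (intro ballI impI)
        fix p q assume "p \<in> Q'" "q \<in> Q'" "p \<noteq> q"
        then obtain p0 q0 where "p0 \<in> Q" "q0 \<in> Q" "p = from_last XB p0" "q = from_last XB q0" "p0 \<noteq> q0"
          unfolding Q'_def by blast
        then show "set p \<inter> set q = {}" using Q(4) fl_set[of XB p0] fl_set[of XB q0] unfolding disj_sys_def by blast
      qed
      have hdQ: "hd ` Q' = XB"
      proof (rule card_subset_eq[OF finXB(1)])
        show "hd ` Q' \<subseteq> XB" using Qp by blast
        have "inj_on hd Q'"
        proof (rule inj_onI)
          fix q1 q2 assume q: "q1 \<in> Q'" "q2 \<in> Q'" "hd q1 = hd q2"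
          have "q1 \<noteq> []" "q2 \<noteq> []" using Qp[OF q(1)] Qp[OF q(2)] unfolding is_path_def by simp_all
          then show "q1 = q2" using disj_hd_inj[OF dQ' q(1,2)] q(3) by simp
        qed
        then show "card (hd ` Q') = card XB" using card_image cQ' finXB by metis
      qed
      define Qf where "Qf = (\<lambda>w. SOME q. q \<in> Q' \<and> hd q = w)"
      have Qf: "Qf w \<in> Q' \<and> hd (Qf w) = w" if "w \<in> XB" for w
      proof -
        have "\<exists>q. q \<in> Q' \<and> hd q = w" using hdQ that by blast
        then show ?thesis unfolding Qf_def by (rule someI_ex)
      qed
      have key: "z = last p \<and> z = hd q \<and> z \<in> S" if pq: "p \<in> P'" "q \<in> Q'" "z \<in> set p" "z \<in> set q" for p q z
      proof -
        obtain p1 p2 where p12: "p = p1 @ z # p2" using split_list[OF pq(3)] by blast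
        obtain q1 q2 where q12: "q = q1 @ z # q2" using split_list[OF pq(4)] by blast
        define w where "w = p1 @ z # q2"
        have sp: "successively E' (p1 @ [z])" using Pp[OF pq(1)] unfolding p12 is_path_def
          by (simp add: successively_append_iff)
        have sq: "successively E' (z # q2)" using Qp[OF pq(2)] unfolding q12 is_path_def
          by (simp add: successively_append_iff)
        have "successively E' w" using sp sq unfolding w_def
          by (auto simp: successively_append_iff successively_Cons)
        then have "successively (\<lambda>a b. a = b \<or> E' a b) w" by (rule successively_mono) simp
        then obtain pp where pp: "distinct pp" "successively E' pp" "pp \<noteq> []" "hd pp = hd w" "last pp = last w" "set pp \<subseteq> set w"
          using walk_to_path[of E' w] unfolding w_def by blast
        have "hd w = hd p" unfolding w_def p12 by (cases p1) auto
        moreover have "last w = last q" unfolding w_def q12 by (cases q2) auto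
        ultimately have "ab_path E' A B pp" using pp Pp[OF pq(1)] Qp[OF pq(2)] unfolding ab_path_def is_path_def by auto
        then obtain s where s: "s \<in> S" "s \<in> set w" using S(2) pp(6) unfolding separates_def by blast
        have bp: "set p1 \<subseteq> set (butlast p)" unfolding p12 by (simp add: butlast_append)
        have tq: "set q2 \<subseteq> set (tl q)" unfolding q12 by (cases q1) auto
        have "s \<notin> set p1" using bp Pp[OF pq(1)] s(1) unfolding XA_def by blast
        moreover have "s \<notin> set q2" using tq Qp[OF pq(2)] s(1) unfolding XB_def by blast
        ultimately have zS: "z \<in> S" using s unfolding w_def by auto
        have "z \<notin> set (butlast p)" using Pp[OF pq(1)] zS unfolding XA_def by blast
        moreover have "p \<noteq> []" using Pp[OF pq(1)] unfolding is_path_def by simp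
        ultimately have zl: "z = last p" using pq(3) set_butlast_last[of p] by auto
        have "z \<notin> set (tl q)" using Qp[OF pq(2)] zS unfolding XB_def by blast
        moreover have "q \<noteq> []" using Qp[OF pq(2)] unfolding is_path_def by simp
        ultimately have "z = hd q" using pq(4) by (cases q) auto
        then show ?thesis using zS zl by simp
      qed
      define partner where "partner v = (if v = y then x else v)" for v
      have partner: "partner v \<in> XB" if "v \<in> XA" for v
        using that xy xS yS unfolding partner_def XA_def XB_def by auto
      have partner_inj: "v1 = v2" if "v1 \<in> XA" "v2 \<in> XA" "partner v1 = partner v2" for v1 v2
        using that xS yS xy unfolding partner_def XA_def by (auto split: if_splits)
      define comb where "comb p = p @ (if last p = y then Qf x else tl (Qf (last p)))" for p
      have combset: "set (comb p) \<subseteq> set p \<union> set (Qf (partner (last p)))" for p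
        unfolding comb_def partner_def by (auto dest: set_tl_sub)
      have neP: "p \<noteq> []" if "p \<in> P'" for p using Pp[OF that] unfolding is_path_def by simp
      have neQ: "q \<noteq> []" if "q \<in> Q'" for q using Qp[OF that] unfolding is_path_def by simp
      have mono: "is_path E' p \<Longrightarrow> is_path E p" for p using is_path_mono[OF _ E'E] .
      have combpath: "ab_path E A B (comb p)" if p: "p \<in> P'" for p
      proof -
        have pp: "is_path E p" "hd p \<in> A" "last p \<in> XA" using Pp[OF p] mono by auto
        show ?thesis
        proof (cases "last p = y")
          case True
          have xB: "x \<in> XB" unfolding XB_def by simp
          define q where "q = Qf x"
          have q: "q \<in> Q'" "hd q = x" using Qf[OF xB] unfolding q_def by auto
          have qq: "is_path E q" "last q \<in> B" using Qp[OF q(1)] mono by auto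
          have disj: "set p \<inter> set q = {}"
          proof (rule ccontr)
            assume "set p \<inter> set q \<noteq> {}"
            then obtain z where "z \<in> set p" "z \<in> set q" by blast
            then have "z = last p \<and> z \<in> S" using key[OF p q(1)] by blast
            then show False using True yS by auto
          qed
          have "comb p = p @ q" unfolding comb_def q_def using True by simp
          moreover have "is_path E (p @ q)" using pp(1) qq(1) disj True q(2) yx
            unfolding is_path_def by (auto simp: successively_append_iff)
          moreover have "hd (p @ q) = hd p" "last (p @ q) = last q" using neP[OF p] neQ[OF q(1)] by simp_all
          ultimately show ?thesis using pp qq unfolding ab_path_def by simp
        next
          case False
          have vS: "last p \<in> S" using pp(3) False unfolding XA_def by simp
          then have vB: "last p \<in> XB" unfolding XB_def by simp
          define q where "q = Qf (last p)"
          have q: "q \<in> Q'" "hd q = last p" using Qf[OF vB] unfolding q_def by auto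
          have qq: "is_path E q" "last q \<in> B" using Qp[OF q(1)] mono by auto
          have qc: "q = last p # tl q" using q(2) neQ[OF q(1)] by (metis list.collapse)
          have sq: "successively E (last p # tl q)" using qq(1) qc unfolding is_path_def by metis
          have dq: "distinct (last p # tl q)" using qq(1) qc unfolding is_path_def by metis
          have disj: "set p \<inter> set (tl q) = {}"
          proof (rule ccontr)
            assume "set p \<inter> set (tl q) \<noteq> {}"
            then obtain z where z: "z \<in> set p" "z \<in> set (tl q)" by blast
            then have "z \<in> set q" using qc by (metis list.set_intros(2))
            then have "z = hd q" using key[OF p q(1) z(1)] by blast
            then show False using z(2) dq q(2) by simp
          qed
          have c: "comb p = p @ tl q" unfolding comb_def q_def using False by simp
          have "successively E (p @ tl q)"
            using pp(1) sq unfolding is_path_def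
            by (auto simp: successively_append_iff successively_Cons)
          moreover have "distinct (p @ tl q)" using pp(1) dq disj unfolding is_path_def by simp
          moreover have "last (p @ tl q) \<in> B"
          proof (cases "tl q = []")
            case True
            then have "q = [last p]" using qc by simp
            then show ?thesis using qq(2) True by simp
          next
            case False
            then have "last (tl q) = last q" using qc by (metis last_ConsR)
            then show ?thesis using qq(2) False by simp
          qed
          moreover have "hd (p @ tl q) = hd p" using neP[OF p] by simp
          ultimately show ?thesis using pp neP[OF p] c unfolding ab_path_def is_path_def by simp
        qed
      qed
      have Qfp: "Qf (partner (last p)) \<in> Q' \<and> hd (Qf (partner (last p))) = partner (last p)" if "p \<in> P'" for p
        using Qf partner(1) Pp[OF that] by blast
      have crossdisj: "set p1 \<inter> set (Qf (partner (last p2))) = {}" if "p1 \<in> P'" "p2 \<in> P'" "p1 \<noteq> p2" for p1 p2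
      proof (rule ccontr)
        assume "set p1 \<inter> set (Qf (partner (last p2))) \<noteq> {}"
        then obtain z where z: "z \<in> set p1" "z \<in> set (Qf (partner (last p2)))" by blast
        have k: "z = last p1 \<and> z = partner (last p2) \<and> z \<in> S"
          using key[OF that(1) _ z] Qfp[OF that(2)] by auto
        have "partner (last p2) = last p2"
          using k xS unfolding partner_def by (auto split: if_splits)
        then have "last p1 = last p2" using k by auto
        then show False using disj_last_inj[OF dP' that(1,2) neP[OF that(1)] neP[OF that(2)]] that(3) by simp
      qed
      have combdisj: "set (comb p1) \<inter> set (comb p2) = {}" if "p1 \<in> P'" "p2 \<in> P'" "p1 \<noteq> p2" for p1 p2
      proof -
        have "set p1 \<inter> set p2 = {}" using dP' that unfolding disj_sys_def by blast
        moreover have "set p1 \<inter> set (Qf (partner (last p2))) = {}" using crossdisj that by blast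
        moreover have "set p2 \<inter> set (Qf (partner (last p1))) = {}" using crossdisj that by blast
        moreover have "set (Qf (partner (last p1))) \<inter> set (Qf (partner (last p2))) = {}"
        proof -
          have "last p1 \<noteq> last p2" using disj_last_inj[OF dP' that(1,2) neP[OF that(1)] neP[OF that(2)]] that(3) by blast
          then have "partner (last p1) \<noteq> partner (last p2)" using partner_inj Pp that(1,2) by blast
          then have "Qf (partner (last p1)) \<noteq> Qf (partner (last p2))" using Qfp[OF that(1)] Qfp[OF that(2)] by metis
          then show ?thesis using dQ' Qfp[OF that(1)] Qfp[OF that(2)] unfolding disj_sys_def by blast
        qed
        ultimately show ?thesis using combset[of p1] combset[of p2] by blast
      qed
      have combinj: "inj_on comb P'"
      proof (rule inj_onI)
        fix p1 p2 assume a: "p1 \<in> P'" "p2 \<in> P'" "comb p1 = comb p2"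
        show "p1 = p2"
        proof (rule ccontr)
          assume "p1 \<noteq> p2"
          then have "set (comb p1) \<inter> set (comb p2) = {}" using combdisj a by blast
          moreover have "comb p1 \<noteq> []" using neP[OF a(1)] unfolding comb_def by simp
          ultimately show False using a(3) by simp
        qed
      qed
      show ?thesis
      proof (intro exI conjI)
        show "finite (comb ` P')" using cP' by simp
        show "card (comb ` P') = k" using card_image[OF combinj] cP' by simp
        show "\<forall>p\<in>comb ` P'. ab_path E A B p" using combpath by blast
        show "disj_sys (comb ` P')" unfolding disj_sys_def using combdisj by blast
      qed
    qed
  qed
  qed
qed

lemma menger:
  assumes "finite {(u,v). E u v}" "\<forall>v. \<not> E v v" "finite A"
   "\<forall>T. finite T \<longrightarrow> separates E A B T \<longrightarrow> k \<le> card T"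
  shows "\<exists>P. finite P \<and> card P = k \<and> (\<forall>p\<in>P. ab_path E A B p) \<and> disj_sys P"
proof -
  note h = menger_n[of "card {(u,v). E u v}", THEN spec[of _ E], THEN spec[of _ A], THEN spec[of _ B], THEN spec[of _ k]]
  show ?thesis using mp[OF mp[OF mp[OF mp[OF mp[OF h refl] assms(1)] assms(2)] assms(3)] assms(4)] .
qed

lemma konig_seq:
  fixes f :: "nat \<Rightarrow> nat \<Rightarrow> 'b"
  assumes M: "\<And>i. finite (M i)" and f: "\<And>i j. i \<le> j \<Longrightarrow> f i j \<in> M i"
  shows "\<exists>c. \<forall>i. \<exists>j\<ge>i. \<forall>i'\<le>i. f i' j = c i'"
proof -
  define val where "val X i = (SOME c. infinite {j\<in>X. f i j = c})" for X i
  define step where "step X i = {j\<in>X. f i j = val X i}" for X i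
  have stepinf: "infinite (step X i)" if X: "infinite X" for X i
  proof -
    have "finite {j\<in>X. j < i}" by simp
    have inf1: "infinite {j\<in>X. i \<le> j}"
    proof
      assume "finite {j\<in>X. i \<le> j}"
      then have "finite ({j\<in>X. j < i} \<union> {j\<in>X. i \<le> j})" using \<open>finite {j\<in>X. j < i}\<close> by simp
      moreover have "{j\<in>X. j < i} \<union> {j\<in>X. i \<le> j} = X" by auto
      ultimately show False using X by simp
    qed
    have "f i ` {j\<in>X. i \<le> j} \<subseteq> M i" using f by blast
    then have "finite (f i ` {j\<in>X. i \<le> j})" using M finite_subset by blast
    then obtain y where "infinite (f i -` {y} \<inter> {j\<in>X. i \<le> j})"
      using inf_img_fin_dom'[OF _ inf1] by blast
    moreover have "f i -` {y} \<inter> {j\<in>X. i \<le> j} \<subseteq> {j\<in>X. f i j = y}" by auto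
    ultimately have "infinite {j\<in>X. f i j = y}" using finite_subset by blast
    then have "\<exists>c. infinite {j\<in>X. f i j = c}" by blast
    then have "infinite {j\<in>X. f i j = val X i}" unfolding val_def by (rule someI_ex)
    then show ?thesis unfolding step_def .
  qed
  define J where "J = rec_nat (step UNIV 0) (\<lambda>i Ji. step Ji (Suc i))"
  have J0: "J 0 = step UNIV 0" and JS: "J (Suc i) = step (J i) (Suc i)" for i
    unfolding J_def by simp_all
  define cv where "cv = rec_nat (val UNIV 0) (\<lambda>i _. val (J i) (Suc i))"
  have cv0: "cv 0 = val UNIV 0" and cvS: "cv (Suc i) = val (J i) (Suc i)" for i
    unfolding cv_def by simp_all
  have Jinf: "infinite (J i)" for i
    by (induction i) (auto simp: J0 JS intro!: stepinf)
  have Jval: "j \<in> J i \<Longrightarrow> f i j = cv i" for i j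
    by (cases i) (auto simp: J0 JS cv0 cvS step_def)
  have Jdec: "J (i + d) \<subseteq> J i" for i d
    by (induction d) (auto simp: JS step_def)
  have "\<forall>i. \<exists>j\<ge>i. \<forall>i'\<le>i. f i' j = cv i'"
  proof
    fix i
    obtain j where j: "j \<in> J i" "i \<le> j" using Jinf[of i] by (meson infinite_nat_iff_unbounded_le)
    have "\<forall>i'\<le>i. f i' j = cv i'"
    proof (intro allI impI)
      fix i' assume "i' \<le> i"
      then have "J i \<subseteq> J i'" using Jdec[of i' "i - i'"] by simp
      then show "f i' j = cv i'" using Jval j(1) by blast
    qed
    then show "\<exists>j\<ge>i. \<forall>i'\<le>i. f i' j = cv i'" using j(2) by blast
  qed
  then show ?thesis by blast
qed

lemma rays_limit:
  fixes EH :: "'a \<Rightarrow> 'a \<Rightarrow> bool" and F :: "nat \<Rightarrow> 'a set" and P :: "nat \<Rightarrow> nat \<Rightarrow> 'a list"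
  assumes F_Suc: "\<And>i. F (Suc i) = F i \<union> {v. \<exists>u\<in>F i. EH u v}"
    and Ffin: "\<And>i. finite (F i)"
    and P: "\<And>j t. t \<le> k \<Longrightarrow> is_path EH (P j t) \<and> hd (P j t) \<in> F 0 \<and> set (P j t) - F j \<noteq> {}"
    and Pd: "\<And>j t t'. t \<le> k \<Longrightarrow> t' \<le> k \<Longrightarrow> t \<noteq> t' \<Longrightarrow> set (P j t) \<inter> set (P j t') = {}"
  shows "\<exists>r. (\<forall>t\<le>k. inj (r t) \<and> (\<forall>n. EH (r t n) (r t (Suc n)))) \<and>
             (\<forall>t\<le>k. \<forall>t'\<le>k. t \<noteq> t' \<longrightarrow> range (r t) \<inter> range (r t') = {})"
proof -
  have Fmono: "F i \<subseteq> F j" if "i \<le> j" for i j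
  proof -
    have h: "\<And>n. F n \<subseteq> F (Suc n)" using F_Suc by blast
    show ?thesis by (rule lift_Suc_mono_le[of F, OF h that])
  qed
  define rho where "rho i Q = (\<lambda>t. if t \<le> k then upto_first (-F i) (Q t) else undefined)" for i and Q :: "nat \<Rightarrow> 'a list"
  define M where "M i = PiE {..k} (\<lambda>_. {xs. set xs \<subseteq> F (Suc i) \<and> length xs \<le> card (F (Suc i))})" for i
  have Mfin: "finite (M i)" for i
    unfolding M_def by (intro finite_PiE) (auto intro: finite_lists_length_le Ffin)
  have Lprops: "is_path EH (upto_first (-F i) (P j t)) \<and> hd (upto_first (-F i) (P j t)) \<in> F 0 \<and>
      last (upto_first (-F i) (P j t)) \<notin> F i \<and> set (upto_first (-F i) (P j t)) \<subseteq> F (Suc i)"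
    if "i \<le> j" "t \<le> k" for i j t
  proof -
    have Pj: "is_path EH (P j t)" "hd (P j t) \<in> F 0" "set (P j t) - F j \<noteq> {}" using P[OF that(2)] by auto
    have ne: "P j t \<noteq> []" using Pj(1) unfolding is_path_def by simp
    have "set (P j t) \<inter> -F i \<noteq> {}" using Pj(3) Fmono[OF that(1)] by blast
    then have l: "last (upto_first (-F i) (P j t)) \<notin> F i" using uf_last[of "P j t" "-F i"] by simp
    have h: "hd (upto_first (-F i) (P j t)) \<in> F 0" using uf_hd[OF ne] Pj(2) by simp
    have "F 0 \<subseteq> F i" using Fmono by simp
    then have "set (upto_first (-F i) (P j t)) \<subseteq> F i \<union> {v. \<exists>u\<in>F i. EH u v}"
      using uf_F[of EH "P j t" "F i"] Pj ne \<open>F 0 \<subseteq> F i\<close> unfolding is_path_def by blast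
    then have s: "set (upto_first (-F i) (P j t)) \<subseteq> F (Suc i)" using F_Suc by simp
    have "is_path EH (upto_first (-F i) (P j t))"
      using Pj(1) uf_nonempty[OF ne] uf_distinct[of "P j t" "-F i"] uf_succ[of EH "P j t" "-F i"] unfolding is_path_def by blast
    then show ?thesis using l h s by blast
  qed
  have fM: "rho i (P j) \<in> M i" if "i \<le> j" for i j
    unfolding M_def rho_def
  proof (rule PiE_I)
    fix t assume t: "t \<in> {..k}"
    then have "t \<le> k" by simp
    note L = Lprops[OF that this]
    have "length (upto_first (-F i) (P j t)) = card (set (upto_first (-F i) (P j t)))"
      using L unfolding is_path_def by (simp add: distinct_card)
    also have "\<dots> \<le> card (F (Suc i))" using L Ffin by (simp add: card_mono)
    finally show "(if t \<le> k then upto_first (- F i) (P j t) else undefined)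
        \<in> {xs. set xs \<subseteq> F (Suc i) \<and> length xs \<le> card (F (Suc i))}" using L \<open>t \<le> k\<close> by simp
  qed auto
  obtain c where c: "\<forall>i. \<exists>j\<ge>i. \<forall>i'\<le>i. rho i' (P j) = c i'"
    using konig_seq[of M "\<lambda>i j. rho i (P j)", OF Mfin fM] by blast
  have cj: "\<exists>j\<ge>i. \<forall>t\<le>k. c i t = upto_first (-F i) (P j t)" for i
  proof -
    obtain j where j: "j \<ge> i" "\<forall>i'\<le>i. rho i' (P j) = c i'" using c by blast
    have "\<forall>t\<le>k. c i t = upto_first (-F i) (P j t)"
    proof (intro allI impI)
      fix t assume t: "t \<le> k"
      have "c i t = rho i (P j) t" using j(2) by simp
      then show "c i t = upto_first (-F i) (P j t)" unfolding rho_def using t by simp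
    qed
    then show ?thesis using j(1) by blast
  qed
  have cprops: "is_path EH (c i t) \<and> hd (c i t) \<in> F 0 \<and> last (c i t) \<notin> F i \<and> set (c i t) \<subseteq> F (Suc i)"
    if "t \<le> k" for i t
  proof -
    obtain j where j: "j \<ge> i" "\<forall>t\<le>k. c i t = upto_first (-F i) (P j t)" using cj[of i] by blast
    show ?thesis using Lprops[OF j(1) that] j(2) that by simp
  qed
  have compat: "c i t = upto_first (-F i) (c (Suc i) t)" if "t \<le> k" for i t
  proof -
    obtain j where j: "j \<ge> Suc i" "\<forall>i'\<le>Suc i. rho i' (P j) = c i'" using c by blast
    have "c i t = rho i (P j) t" using j(2) by simp
    then have 1: "c i t = upto_first (-F i) (P j t)" unfolding rho_def using that by simp
    have "c (Suc i) t = rho (Suc i) (P j) t" using j(2) by simp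
    then have 2: "c (Suc i) t = upto_first (-F (Suc i)) (P j t)" unfolding rho_def using that by simp
    have "-F (Suc i) \<subseteq> -F i" using Fmono[of i "Suc i"] by auto
    then show ?thesis unfolding 1 2 by (simp add: uf_comp)
  qed
  have cpre: "\<exists>s. c (i + d) t = c i t @ s" if "t \<le> k" for i d t
  proof (induction d)
    case 0 then show ?case by simp
  next
    case (Suc d)
    then obtain s where s: "c (i + d) t = c i t @ s" by blast
    obtain s' where "c (Suc (i + d)) t = upto_first (-F (i + d)) (c (Suc (i + d)) t) @ s'" using uf_prefix by blast
    then have "c (Suc (i + d)) t = c (i + d) t @ s'" using compat[OF that] by metis
    then show ?case using s by simp
  qed
  have clen: "i < length (c i t)" if tk: "t \<le> k" for i t
  proof (induction i)
    case 0 then show ?case using cprops[OF tk, of 0] unfolding is_path_def by simp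
  next
    case (Suc i)
    obtain s where s: "c (Suc i) t = c i t @ s" using cpre[OF tk, of i 1] by auto
    have ne: "c i t \<noteq> []" using cprops[OF tk, of i] unfolding is_path_def by simp
    have "last (c i t) \<in> F (Suc i)" using cprops[OF tk, of i] ne last_in_set by blast
    moreover have "last (c (Suc i) t) \<notin> F (Suc i)" using cprops[OF tk, of "Suc i"] by blast
    ultimately have "s \<noteq> []" using s by auto
    then have l1: "length s \<ge> 1" by (cases s) auto
    have "length (c (Suc i) t) = length (c i t) + length s" using s by simp
    then show ?case using l1 Suc.IH by linarith
  qed
  define r where "r t n = c n t ! n" for t n
  have rnth: "r t n = c i t ! n" if tn: "t \<le> k" "n \<le> i" for t n i
  proof -
    obtain s where "c i t = c n t @ s" using cpre[OF tn(1), of n "i - n"] tn(2) by auto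
    then show ?thesis unfolding r_def using clen[OF tn(1), of n] by (simp add: nth_append)
  qed
  have "\<forall>t\<le>k. inj (r t) \<and> (\<forall>n. EH (r t n) (r t (Suc n)))"
  proof (intro allI impI conjI)
    fix t assume t: "t \<le> k"
    show "inj (r t)"
    proof (rule injI)
      fix a b assume ab: "r t a = r t b"
      let ?i = "max a b"
      have "c ?i t ! a = c ?i t ! b" using ab rnth[OF t, of a ?i] rnth[OF t, of b ?i] by simp
      moreover have "distinct (c ?i t)" using cprops[OF t] unfolding is_path_def by blast
      moreover have "a < length (c ?i t)" "b < length (c ?i t)" using clen[OF t, of ?i] by auto
      ultimately show "a = b" using nth_eq_iff_index_eq by blast
    qed
    fix n
    have "r t n = c (Suc n) t ! n" "r t (Suc n) = c (Suc n) t ! Suc n" using rnth[OF t] by auto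
    moreover have "successively EH (c (Suc n) t)" using cprops[OF t] unfolding is_path_def by blast
    ultimately show "EH (r t n) (r t (Suc n))" using successively_nth clen[OF t, of "Suc n"] by metis
  qed
  moreover have "\<forall>t\<le>k. \<forall>t'\<le>k. t \<noteq> t' \<longrightarrow> range (r t) \<inter> range (r t') = {}"
  proof (intro allI impI)
    fix t t' assume tt: "t \<le> k" "t' \<le> k" "t \<noteq> t'"
    show "range (r t) \<inter> range (r t') = {}"
    proof (rule ccontr)
      assume "range (r t) \<inter> range (r t') \<noteq> {}"
      then obtain a b where ab: "r t a = r t' b" by auto
      let ?i = "max a b"
      obtain j where j: "\<forall>t\<le>k. c ?i t = upto_first (-F ?i) (P j t)" using cj by blast
      have "r t a \<in> set (c ?i t)" using rnth[OF tt(1), of a ?i] clen[OF tt(1), of ?i] by auto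
      then have "r t a \<in> set (P j t)" using j tt(1) uf_set[of "-F ?i" "P j t"] by auto
      moreover have "r t' b \<in> set (c ?i t')" using rnth[OF tt(2), of b ?i] clen[OF tt(2), of ?i] by auto
      then have "r t' b \<in> set (P j t')" using j tt(2) uf_set[of "-F ?i" "P j t'"] by auto
      ultimately show False using Pd[OF tt] ab by auto
    qed
  qed
  ultimately show ?thesis by blast
qed

lemma rtranclp_sym_rel:
  assumes "\<forall>a b. R a b \<longrightarrow> R b a" "R\<^sup>*\<^sup>* x y" shows "R\<^sup>*\<^sup>* y x"
  using assms(2)
proof (induction rule: rtranclp.induct)
  case (rtrancl_refl a) then show ?case by simp
next
  case (rtrancl_into_rtrancl a b c)
  then have "R c b" using assms(1) by blast
  then show ?case using rtrancl_into_rtrancl.IH converse_rtranclp_into_rtranclp by metis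
qed

lemma rtranclp_in_U:
  assumes "(\<lambda>a b. E a b \<and> a \<in> U \<and> b \<in> U)\<^sup>*\<^sup>* x y" "x \<in> U" shows "y \<in> U"
  using assms by (induction rule: rtranclp.induct) auto

lemma conn_sym:
  assumes "\<forall>a b. E a b \<longrightarrow> E b a" "conn_in E U x y" shows "conn_in E U y x"
proof -
  let ?R = "\<lambda>a b. E a b \<and> a \<in> U \<and> b \<in> U"
  have r: "?R\<^sup>*\<^sup>* x y" "x \<in> U" using assms(2) unfolding conn_in_def by auto
  have "y \<in> U" using rtranclp_in_U[OF r] .
  moreover have "?R\<^sup>*\<^sup>* y x" by (rule rtranclp_sym_rel[OF _ r(1)]) (use assms(1) in auto)
  ultimately show ?thesis unfolding conn_in_def by simp
qed

lemma conn_trans: "conn_in E U x y \<Longrightarrow> conn_in E U y z \<Longrightarrow> conn_in E U x z"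
  unfolding conn_in_def by (meson rtranclp_trans)

lemma graph_sym: "graph V E \<Longrightarrow> \<forall>a b. E a b \<longrightarrow> E b a"
  unfolding graph_def by blast

lemma ray_equiv_sym:
  assumes "\<forall>a b. E a b \<longrightarrow> E b a" "ray_equiv V E r s" shows "ray_equiv V E s r"
  unfolding ray_equiv_def
proof (intro allI impI)
  fix S assume S: "finite S \<and> S \<subseteq> V"
  then obtain n m where "\<forall>i\<ge>n. \<forall>j\<ge>m. conn_in E (V - S) (r i) (s j)"
    using assms(2) unfolding ray_equiv_def by blast
  then have "\<forall>i\<ge>m. \<forall>j\<ge>n. conn_in E (V - S) (s i) (r j)" using conn_sym[OF assms(1)] by simp
  then show "\<exists>n m. \<forall>i\<ge>n. \<forall>j\<ge>m. conn_in E (V - S) (s i) (r j)" by blast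
qed

lemma ray_equiv_trans:
  assumes "ray_equiv V E r s" "ray_equiv V E s t" shows "ray_equiv V E r t"
  unfolding ray_equiv_def
proof (intro allI impI)
  fix S assume S: "finite S \<and> S \<subseteq> V"
  obtain n1 m1 where 1: "\<forall>i\<ge>n1. \<forall>j\<ge>m1. conn_in E (V - S) (r i) (s j)"
    using assms(1)[unfolded ray_equiv_def, rule_format, OF S] by blast
  obtain n2 m2 where 2: "\<forall>i\<ge>n2. \<forall>j\<ge>m2. conn_in E (V - S) (s i) (t j)"
    using assms(2)[unfolded ray_equiv_def, rule_format, OF S] by blast
  have "\<forall>i\<ge>n1. \<forall>j\<ge>m2. conn_in E (V - S) (r i) (t j)"
  proof (intro allI impI)
    fix i j assume "n1 \<le> i" "m2 \<le> j"
    then have a: "conn_in E (V - S) (r i) (s (max m1 n2))" "conn_in E (V - S) (s (max m1 n2)) (t j)"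
      using 1 2 by simp_all
    show "conn_in E (V - S) (r i) (t j)" using conn_trans[OF a] .
  qed
  then show "\<exists>n m. \<forall>i\<ge>n. \<forall>j\<ge>m. conn_in E (V - S) (r i) (t j)" by blast
qed

lemma ray_finite_hits: "inj (r :: nat \<Rightarrow> 'a) \<Longrightarrow> finite S \<Longrightarrow> \<exists>N. \<forall>i\<ge>N. r i \<notin> S"
proof -
  assume "inj r" "finite S"
  then have "finite (r -` S)" by (simp add: finite_vimageI)
  then have "\<exists>m. \<forall>n\<in>r -` S. n < m" by (rule finite_nat_set_iff_bounded[THEN iffD1])
  then obtain N where N: "\<forall>i\<in>r -` S. i < N" by blast
  have "\<forall>i\<ge>N. r i \<notin> S"
  proof (intro allI impI)
    fix i assume "N \<le> i"
    show "r i \<notin> S"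
    proof
      assume "r i \<in> S"
      then have "i \<in> r -` S" by simp
      then have "i < N" using N by blast
      then show False using \<open>N \<le> i\<close> by simp
    qed
  qed
  then show ?thesis by blast
qed

lemma ray_seg:
  assumes "\<forall>a b. E a b \<longrightarrow> E b a" "\<forall>l. E (r l) (r (Suc l))" "\<forall>l\<ge>N. r l \<in> U" "N \<le> i" "N \<le> j"
  shows "conn_in E U (r i) (r j)"
proof -
  let ?R = "\<lambda>a b. E a b \<and> a \<in> U \<and> b \<in> U"
  have fw: "?R\<^sup>*\<^sup>* (r i) (r (i + d))" if "N \<le> i" for i d
  proof (induction d)
    case 0 then show ?case by simp
  next
    case (Suc d)
    have "?R (r (i + d)) (r (Suc (i + d)))" using assms(2,3) that by simp
    from rtranclp.rtrancl_into_rtrancl[OF Suc this] show ?case by simp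
  qed
  have "?R\<^sup>*\<^sup>* (r i) (r j)"
  proof (cases "i \<le> j")
    case True then show ?thesis using fw[OF assms(4), of "j - i"] by simp
  next
    case False
    then have "?R\<^sup>*\<^sup>* (r j) (r i)" using fw[OF assms(5), of "i - j"] by simp
    then show ?thesis by (rule rtranclp_sym_rel[rotated]) (use assms(1) in auto)
  qed
  then show ?thesis unfolding conn_in_def using assms(3,4) by simp
qed

lemma ray_equiv_refl:
  assumes "\<forall>a b. E a b \<longrightarrow> E b a" "ray V E r" shows "ray_equiv V E r r"
  unfolding ray_equiv_def
proof (intro allI impI)
  fix S assume S: "finite S \<and> S \<subseteq> V"
  have ir: "inj r" "\<forall>l. r l \<in> V" "\<forall>l. E (r l) (r (Suc l))" using assms(2) unfolding ray_def by simp_all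
  obtain N where N: "\<forall>i\<ge>N. r i \<notin> S" using ray_finite_hits[OF ir(1)] S by blast
  have U: "\<forall>l\<ge>N. r l \<in> V - S" using N ir(2) by simp
  have "\<forall>i\<ge>N. \<forall>j\<ge>N. conn_in E (V - S) (r i) (r j)"
  proof (intro allI impI)
    fix i j assume "N \<le> i" "N \<le> j"
    show "conn_in E (V - S) (r i) (r j)" by (rule ray_seg[OF assms(1) ir(3) U \<open>N \<le> i\<close> \<open>N \<le> j\<close>])
  qed
  then show "\<exists>n m. \<forall>i\<ge>n. \<forall>j\<ge>m. conn_in E (V - S) (r i) (r j)" by blast
qed

lemma ends_equiv:
  assumes "\<forall>a b. E a b \<longrightarrow> E b a" "\<alpha> \<in> ends V E" "s \<in> \<alpha>" "t \<in> \<alpha>" shows "ray_equiv V E s t"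
proof -
  obtain r where r: "\<alpha> = {s. ray V E s \<and> ray_equiv V E r s}" using assms(2) unfolding ends_def by blast
  have "ray_equiv V E r s" "ray_equiv V E r t" using assms(3,4) r by auto
  then have "ray_equiv V E s r" using ray_equiv_sym[OF assms(1)] by simp
  then show ?thesis using ray_equiv_trans \<open>ray_equiv V E r t\<close> by blast
qed

lemma ends_closed:
  assumes "\<alpha> \<in> ends V E" "s \<in> \<alpha>" "ray V E t" "ray_equiv V E s t" shows "t \<in> \<alpha>"
proof -
  obtain r where r: "\<alpha> = {s. ray V E s \<and> ray_equiv V E r s}" using assms(1) unfolding ends_def by blast
  have "ray_equiv V E r s" using assms(2) r by auto
  then have "ray_equiv V E r t" using assms(4) ray_equiv_trans by blast
  then show ?thesis using r assms(3) by simp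
qed

lemma cart_sym: "graph VG EG \<Longrightarrow> graph VD ED \<Longrightarrow> \<forall>a b. cart_E EG ED a b \<longrightarrow> cart_E EG ED b a"
proof -
  assume "graph VG EG" "graph VD ED"
  then have "\<forall>a b. EG a b \<longrightarrow> EG b a" "\<forall>a b. ED a b \<longrightarrow> ED b a" using graph_sym by blast+
  then show ?thesis unfolding cart_E_def by auto
qed

lemma conn_project:
  assumes "conn_in (cart_E EG ED) (cart_V VG VD - S \<times> VD) p q"
  shows "conn_in EG (VG - S) (fst p) (fst q)"
proof -
  let ?U = "cart_V VG VD - S \<times> VD"
  let ?R = "\<lambda>a b. cart_E EG ED a b \<and> a \<in> ?U \<and> b \<in> ?U"
  let ?R2 = "\<lambda>a b. EG a b \<and> a \<in> VG - S \<and> b \<in> VG - S"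
  have r: "?R\<^sup>*\<^sup>* p q" "p \<in> ?U" using assms unfolding conn_in_def by auto
  have inU: "a \<in> ?U \<Longrightarrow> fst a \<in> VG - S" for a unfolding cart_V_def by (cases a) auto
  have "?R2\<^sup>*\<^sup>* (fst p) (fst q)" using r(1)
  proof (induction rule: rtranclp.induct)
    case (rtrancl_refl a) then show ?case by simp
  next
    case (rtrancl_into_rtrancl a b c)
    show ?case
    proof (cases "fst b = fst c")
      case True then show ?thesis using rtrancl_into_rtrancl.IH by simp
    next
      case False
      then have "EG (fst b) (fst c)" using rtrancl_into_rtrancl.hyps(2) unfolding cart_E_def by auto
      moreover have "b \<in> ?U" "c \<in> ?U" using rtrancl_into_rtrancl.hyps(2) by simp_all
      ultimately have "?R2 (fst b) (fst c)" using inU by simp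
      from rtranclp.rtrancl_into_rtrancl[OF rtrancl_into_rtrancl.IH this] show ?thesis .
    qed
  qed
  then show ?thesis unfolding conn_in_def using inU[OF r(2)] by simp
qed

lemma fibre_path:
  assumes "(\<lambda>a b. ED a b \<and> a \<in> VD \<and> b \<in> VD)\<^sup>*\<^sup>* a b" "v \<in> VG" "v \<notin> fst ` S"
  shows "(\<lambda>p q. cart_E EG ED p q \<and> p \<in> cart_V VG VD - S \<and> q \<in> cart_V VG VD - S)\<^sup>*\<^sup>* (v, a) (v, b)"
  using assms(1)
proof (induction rule: rtranclp.induct)
  case (rtrancl_refl a) then show ?case by simp
next
  case (rtrancl_into_rtrancl a b c)
  have "ED b c" "b \<in> VD" "c \<in> VD" using rtrancl_into_rtrancl.hyps(2) by simp_all
  then have "cart_E EG ED (v, b) (v, c) \<and> (v, b) \<in> cart_V VG VD - S \<and> (v, c) \<in> cart_V VG VD - S"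
    using assms(2,3) unfolding cart_E_def cart_V_def by (auto simp: rev_image_eqI)
  from rtranclp.rtrancl_into_rtrancl[OF rtrancl_into_rtrancl.IH this] show ?case .
qed

lemma lift_in:
  assumes gG: "graph VG EG" and gD: "graph VD ED" and cD: "connected_graph VD ED"
    and x0: "x0 \<in> VD" and y: "y \<in> VD"
    and a': "\<alpha>' \<in> ends (cart_V VG VD) (cart_E EG ED)"
    and r: "ray VG EG r" and rin: "(\<lambda>i. (r i, x0)) \<in> \<alpha>'"
  shows "(\<lambda>i. (r i, y)) \<in> \<alpha>'"
proof -
  let ?V = "cart_V VG VD" and ?E = "cart_E EG ED"
  have sym: "\<forall>a b. ?E a b \<longrightarrow> ?E b a" using cart_sym[OF gG gD] .
  have ir: "inj r" "\<forall>l. r l \<in> VG" "\<forall>l. EG (r l) (r (Suc l))" using r unfolding ray_def by simp_all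
  have rayy: "ray ?V ?E (\<lambda>i. (r i, z))" if z: "z \<in> VD" for z
    unfolding ray_def
  proof (intro conjI)
    show "inj (\<lambda>i. (r i, z))" using ir(1) unfolding inj_def by simp
    show "\<forall>i. (r i, z) \<in> ?V" using ir(2) z unfolding cart_V_def by simp
    show "\<forall>i. ?E (r i, z) (r (Suc i), z)" using ir(3) unfolding cart_E_def by simp
  qed
  have eq: "ray_equiv ?V ?E (\<lambda>i. (r i, x0)) (\<lambda>i. (r i, y))"
    unfolding ray_equiv_def
  proof (intro allI impI)
    fix S assume S: "finite S \<and> S \<subseteq> ?V"
    obtain N where N: "\<forall>i\<ge>N. r i \<notin> fst ` S" using ray_finite_hits[OF ir(1)] S by blast
    have inU: "(r l, z) \<in> ?V - S" if "N \<le> l" "z \<in> VD" for l z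
    proof -
      have "r l \<notin> fst ` S" using N that(1) by simp
      then have "(r l, z) \<notin> S" by (metis fst_conv rev_image_eqI)
      then show ?thesis using ir(2) that(2) unfolding cart_V_def by simp
    qed
    have DD: "(\<lambda>a b. ED a b \<and> a \<in> VD \<and> b \<in> VD)\<^sup>*\<^sup>* x0 y"
      using cD x0 y unfolding connected_graph_def conn_in_def by blast
    have "\<forall>i\<ge>N. \<forall>j\<ge>N. conn_in ?E (?V - S) (r i, x0) (r j, y)"
    proof (intro allI impI)
      fix i j assume ij: "N \<le> i" "N \<le> j"
      have "r i \<notin> fst ` S" using N ij(1) by simp
      then have c1: "conn_in ?E (?V - S) (r i, x0) (r i, y)"
        using fibre_path[OF DD ir(2)[rule_format, of i], of S EG] inU[OF ij(1) x0] unfolding conn_in_def by simp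
      have U: "\<forall>l\<ge>N. (r l, y) \<in> ?V - S" using inU y by blast
      have st: "\<forall>l. ?E (r l, y) (r (Suc l), y)" using rayy[OF y] unfolding ray_def by blast
      have c2: "conn_in ?E (?V - S) (r i, y) (r j, y)"
        using ray_seg[OF sym, of "\<lambda>l. (r l, y)", OF st U ij] by simp
      show "conn_in ?E (?V - S) (r i, x0) (r j, y)" using conn_trans[OF c1 c2] .
    qed
    then show "\<exists>n m. \<forall>i\<ge>n. \<forall>j\<ge>m. conn_in ?E (?V - S) (r i, x0) (r j, y)" by blast
  qed
  show ?thesis using ends_closed[OF a' rin rayy[OF y] eq] .
qed

lemma lower_bound:
  assumes gG: "graph VG EG" and gD: "graph VD ED" and cD: "connected_graph VD ED" and fD: "finite VD"
    and x0: "x0 \<in> VD"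
    and a: "\<alpha> \<in> ends VG EG"
    and a': "\<alpha>' \<in> ends (cart_V VG VD) (cart_E EG ED)"
    and sub: "(\<lambda>r i. (r i, x0)) ` \<alpha> \<subseteq> \<alpha>'"
    and R: "finite R" "R \<subseteq> \<alpha>" "\<forall>r\<in>R. \<forall>s\<in>R. r \<noteq> s \<longrightarrow> range r \<inter> range s = {}"
  shows "enat (card R * card VD) \<le> end_degree \<alpha>'"
proof -
  define lift where "lift = (\<lambda>(r :: nat \<Rightarrow> 'a, y :: 'b) i. (r i, y))"
  define R' where "R' = lift ` (R \<times> VD)"
  have rays: "ray VG EG r" if "r \<in> \<alpha>" for r
    using a that unfolding ends_def by blast
  have inj: "inj_on lift (R \<times> VD)"
  proof (rule inj_onI)
    fix p q assume "p \<in> R \<times> VD" "q \<in> R \<times> VD" "lift p = lift q"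
    then have h: "\<forall>i. (fst p i, snd p) = (fst q i, snd q)" unfolding lift_def
      by (metis case_prod_beta)
    then have "fst p = fst q" by auto
    moreover have "snd p = snd q" using h by auto
    ultimately show "p = q" by (simp add: prod_eq_iff)
  qed
  have card: "card R' = card R * card VD" unfolding R'_def using card_image[OF inj] card_cartesian_product by metis
  have fin: "finite R'" unfolding R'_def using R(1) fD by simp
  have subs: "R' \<subseteq> \<alpha>'"
  proof
    fix s assume "s \<in> R'"
    then obtain r y where ry: "r \<in> R" "y \<in> VD" "s = (\<lambda>i. (r i, y))" unfolding R'_def lift_def by auto
    have "(\<lambda>i. (r i, x0)) \<in> \<alpha>'" using sub R(2) ry(1) by blast
    then show "s \<in> \<alpha>'" using lift_in[OF gG gD cD x0 ry(2) a' rays] R(2) ry by blast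
  qed
  have disj: "\<forall>r\<in>R'. \<forall>s\<in>R'. r \<noteq> s \<longrightarrow> range r \<inter> range s = {}"
  proof (intro ballI impI)
    fix s1 s2 assume s: "s1 \<in> R'" "s2 \<in> R'" "s1 \<noteq> s2"
    obtain r1 y1 where 1: "r1 \<in> R" "s1 = (\<lambda>i. (r1 i, y1))" using s(1) unfolding R'_def lift_def by auto
    obtain r2 y2 where 2: "r2 \<in> R" "s2 = (\<lambda>i. (r2 i, y2))" using s(2) unfolding R'_def lift_def by auto
    show "range s1 \<inter> range s2 = {}"
    proof (rule ccontr)
      assume "range s1 \<inter> range s2 \<noteq> {}"
      then obtain i j where "s1 i = s2 j" by blast
      then have e: "r1 i = r2 j" "y1 = y2" using 1 2 by auto
      then have "r1 \<noteq> r2" using s(3) 1 2 by auto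
      then have "range r1 \<inter> range r2 = {}" using R(3) 1(1) 2(1) by blast
      then show False using e(1) by blast
    qed
  qed
  have "R' \<in> {R. finite R \<and> R \<subseteq> \<alpha>' \<and> (\<forall>r\<in>R. \<forall>s\<in>R. r \<noteq> s \<longrightarrow> range r \<inter> range s = {})}"
    using fin subs disj by blast
  then have "enat (card R') \<le> end_degree \<alpha>'" unfolding end_degree_def by (rule SUP_upper)
  then show ?thesis using card by simp
qed

lemma upper_bound:
  assumes gG: "graph VG EG" and gD: "graph VD ED" and fD: "finite VD"
    and x0: "x0 \<in> VD"
    and a: "\<alpha> \<in> ends VG EG"
    and a': "\<alpha>' \<in> ends (cart_V VG VD) (cart_E EG ED)"
    and sub: "(\<lambda>r i. (r i, x0)) ` \<alpha> \<subseteq> \<alpha>'"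
    and bound: "\<forall>R. finite R \<and> R \<subseteq> \<alpha> \<and> (\<forall>r\<in>R. \<forall>s\<in>R. r \<noteq> s \<longrightarrow> range r \<inter> range s = {}) \<longrightarrow> card R \<le> k"
    and R': "finite R'" "R' \<subseteq> \<alpha>'" "\<forall>r\<in>R'. \<forall>s\<in>R'. r \<noteq> s \<longrightarrow> range r \<inter> range s = {}"
  shows "card R' \<le> k * card VD"
proof (rule ccontr)
  assume big: "\<not> card R' \<le> k * card VD"
  let ?V = "cart_V VG VD" and ?E = "cart_E EG ED"
  have rays': "ray ?V ?E r'" if "r' \<in> R'" for r'
    using a' R'(2) that unfolding ends_def by blast
  have inj': "inj r'" and inV: "r' i \<in> VG \<times> VD" and stepE: "?E (r' i) (r' (Suc i))" if "r' \<in> R'" for r' i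
    using rays'[OF that] unfolding ray_def cart_V_def by auto
  have avoid: "\<exists>r'\<in>R'. \<forall>i. fst (r' i) \<notin> T" if T: "finite T" "card T \<le> k" for T
  proof (rule ccontr)
    assume "\<not> (\<exists>r'\<in>R'. \<forall>i. fst (r' i) \<notin> T)"
    then have hit: "\<exists>i. fst (r' i) \<in> T" if "r' \<in> R'" for r' using that by blast
    define g where "g r' = r' (SOME i. fst (r' i) \<in> T)" for r' :: "nat \<Rightarrow> 'a \<times> 'b"
    have gT: "g r' \<in> T \<times> VD" if "r' \<in> R'" for r'
    proof -
      have "fst (r' (SOME i. fst (r' i) \<in> T)) \<in> T" using someI_ex[OF hit[OF that]] .
      moreover have "snd (r' (SOME i. fst (r' i) \<in> T)) \<in> VD" using inV[OF that, of "SOME i. fst (r' i) \<in> T"] by (simp add: mem_Times_iff)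
      ultimately show ?thesis unfolding g_def by (simp add: mem_Times_iff)
    qed
    have "inj_on g R'"
    proof (rule inj_onI)
      fix r1 r2 assume r: "r1 \<in> R'" "r2 \<in> R'" "g r1 = g r2"
      show "r1 = r2"
      proof (rule ccontr)
        assume "r1 \<noteq> r2"
        then have "range r1 \<inter> range r2 = {}" using R'(3) r(1,2) by blast
        moreover have "g r1 \<in> range r1" "g r2 \<in> range r2" unfolding g_def by simp_all
        ultimately show False using r(3) by auto
      qed
    qed
    then have "card R' = card (g ` R')" by (simp add: card_image)
    also have "\<dots> \<le> card (T \<times> VD)"
    proof (rule card_mono)
      show "finite (T \<times> VD)" using T(1) fD by simp
      show "g ` R' \<subseteq> T \<times> VD" using gT by blast
    qed
    also have "\<dots> = card T * card VD" by (simp add: card_cartesian_product)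
    also have "\<dots> \<le> k * card VD" using T(2) by simp
    finally show False using big by simp
  qed
  define EH where "EH u v \<longleftrightarrow> EG u v \<and> (\<exists>r'\<in>R'. \<exists>i. (fst (r' i) = u \<and> fst (r' (Suc i)) = v) \<or> (fst (r' i) = v \<and> fst (r' (Suc i)) = u))" for u v
  have EHG: "EH u v \<Longrightarrow> EG u v" for u v unfolding EH_def by simp
  have EHirr: "\<forall>v. \<not> EH v v" using gG unfolding EH_def graph_def by blast
  have step: "fst (r' i) = fst (r' (Suc i)) \<or> EH (fst (r' i)) (fst (r' (Suc i)))" if "r' \<in> R'" for r' i
  proof (cases "fst (r' i) = fst (r' (Suc i))")
    case False
    then have "EG (fst (r' i)) (fst (r' (Suc i)))" using stepE[OF that, of i] unfolding cart_E_def by auto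
    then show ?thesis unfolding EH_def using that by blast
  qed simp
  have visits: "finite {i. fst (r' i) = u}" if "r' \<in> R'" for r' u
  proof -
    have "r' ` {i. fst (r' i) = u} \<subseteq> {u} \<times> VD"
    proof
      fix z assume "z \<in> r' ` {i. fst (r' i) = u}"
      then obtain i where i: "z = r' i" "fst (r' i) = u" by blast
      have "snd (r' i) \<in> VD" using inV[OF that, of i] by (simp add: mem_Times_iff)
      then show "z \<in> {u} \<times> VD" using i by (simp add: mem_Times_iff)
    qed
    then have "finite (r' ` {i. fst (r' i) = u})" using fD finite_subset by blast
    then show ?thesis using finite_imageD inj'[OF that] inj_on_subset by blast
  qed
  have nbr: "finite {v. EH u v}" for u
  proof -
    have "{v. EH u v} \<subseteq> (\<Union>r'\<in>R'. (\<lambda>i. fst (r' (Suc i))) ` {i. fst (r' i) = u} \<union>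
                                     (\<lambda>i. fst (r' (i - 1))) ` {i. fst (r' i) = u})"
    proof
      fix v assume "v \<in> {v. EH u v}"
      then obtain r' i where ri: "r' \<in> R'" "(fst (r' i) = u \<and> fst (r' (Suc i)) = v) \<or> (fst (r' i) = v \<and> fst (r' (Suc i)) = u)"
        unfolding EH_def by blast
      show "v \<in> (\<Union>r'\<in>R'. (\<lambda>i. fst (r' (Suc i))) ` {i. fst (r' i) = u} \<union>
                                     (\<lambda>i. fst (r' (i - 1))) ` {i. fst (r' i) = u})"
      proof (cases "fst (r' i) = u \<and> fst (r' (Suc i)) = v")
        case True then show ?thesis using ri(1) by blast
      next
        case False
        then have "fst (r' i) = v" "fst (r' (Suc i)) = u" using ri(2) by auto
        then have "v \<in> (\<lambda>i. fst (r' (i - 1))) ` {i. fst (r' i) = u}"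
          by (metis (mono_tags, lifting) diff_Suc_1 image_eqI mem_Collect_eq)
        then show ?thesis using ri(1) by blast
      qed
    qed
    moreover have "finite (\<Union>r'\<in>R'. (\<lambda>i. fst (r' (Suc i))) ` {i. fst (r' i) = u} \<union>
                                     (\<lambda>i. fst (r' (i - 1))) ` {i. fst (r' i) = u})"
      using R'(1) visits by blast
    ultimately show ?thesis using finite_subset by blast
  qed
  define A where "A = (\<lambda>r'. fst (r' 0)) ` R'"
  define F where "F = rec_nat A (\<lambda>_ X. X \<union> {v. \<exists>u\<in>X. EH u v})"
  have F0: "F 0 = A" and FS: "F (Suc i) = F i \<union> {v. \<exists>u\<in>F i. EH u v}" for i
    unfolding F_def by simp_all
  have Ffin: "finite (F i)" for i
  proof (induction i)
    case 0 then show ?case using R'(1) unfolding F0 A_def by simp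
  next
    case (Suc i)
    have "{v. \<exists>u\<in>F i. EH u v} = (\<Union>u\<in>F i. {v. EH u v})" by blast
    then show ?case unfolding FS using Suc nbr by simp
  qed
  have Fmono: "F i \<subseteq> F j" if "i \<le> j" for i j
  proof -
    have h: "\<And>n. F n \<subseteq> F (Suc n)" using FS by blast
    show ?thesis by (rule lift_Suc_mono_le[of F, OF h that])
  qed
  have A0: "fst (r' 0) \<in> F 0" if "r' \<in> R'" for r' using that unfolding F0 A_def by simp
  have sys: "\<exists>P. (\<forall>t\<le>k. is_path EH (P t) \<and> hd (P t) \<in> F 0 \<and> set (P t) - F j \<noteq> {}) \<and>
              (\<forall>t t'. t \<le> k \<longrightarrow> t' \<le> k \<longrightarrow> t \<noteq> t' \<longrightarrow> set (P t) \<inter> set (P t') = {})" for j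
  proof -
    define Ej where "Ej u v \<longleftrightarrow> EH u v \<and> u \<in> F (Suc j) \<and> v \<in> F (Suc j)" for u v
    have finE: "finite {(u,v). Ej u v}"
    proof -
      have "{(u,v). Ej u v} \<subseteq> F (Suc j) \<times> F (Suc j)" unfolding Ej_def by auto
      then show ?thesis using Ffin finite_subset by blast
    qed
    have irr: "\<forall>v. \<not> Ej v v" using EHirr unfolding Ej_def by blast
    have finA: "finite (F 0)" using Ffin by blast
    have sep: "\<forall>T. finite T \<longrightarrow> separates Ej (F 0) (-F j) T \<longrightarrow> Suc k \<le> card T"
    proof (intro allI impI)
      fix T assume T: "finite T" "separates Ej (F 0) (-F j) T"
      show "Suc k \<le> card T"
      proof (rule ccontr)
        assume "\<not> Suc k \<le> card T"
        then have "card T \<le> k" by simp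
        from avoid[OF T(1) this] obtain r' where r': "r' \<in> R'" "\<forall>i. fst (r' i) \<notin> T" by blast
        define w where "w i = fst (r' i)" for i
        have "{i. w i \<in> F j} \<subseteq> (\<Union>u\<in>F j. {i. fst (r' i) = u})" unfolding w_def by blast
        then have "finite {i. w i \<in> F j}" using Ffin visits[OF r'(1)] finite_subset by blast
        have ex: "\<exists>t. w t \<notin> F j"
        proof (rule ccontr)
          assume "\<not> (\<exists>t. w t \<notin> F j)"
          then have "{i. w i \<in> F j} = UNIV" by auto
          then show False using \<open>finite {i. w i \<in> F j}\<close> infinite_UNIV_nat by simp
        qed
        define t0 where "t0 = (LEAST t. w t \<notin> F j)"
        have t0: "w t0 \<notin> F j" "\<forall>i<t0. w i \<in> F j"
          unfolding t0_def using LeastI_ex[OF ex] not_less_Least by auto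
        define l where "l = map w [0..<Suc t0]"
        have wF: "w i \<in> F (Suc j)" if "i \<le> t0" for i
        proof (cases "i < t0")
          case True then show ?thesis using t0(2) FS by blast
        next
          case False
          then have it: "i = t0" using that by simp
          have "w 0 \<in> F j" using A0[OF r'(1)] Fmono[of 0 j] unfolding w_def by auto
          then have "t0 \<noteq> 0" using t0(1) by (metis)
          then obtain t1 where t1: "t0 = Suc t1" by (cases t0) auto
          then have "w t1 \<in> F j" using t0(2) by simp
          moreover have "w t1 = w t0 \<or> EH (w t1) (w t0)" using step[OF r'(1), of t1] t1 unfolding w_def by simp
          ultimately show ?thesis using it t0(1) FS by auto
        qed
        have "successively (\<lambda>a b. a = b \<or> Ej a b) l"
          unfolding successively_conv_nth
        proof (intro allI impI)
          fix i assume "Suc i < length l"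
          then have i: "i < t0" unfolding l_def by simp
          have "l ! i = w i" "l ! Suc i = w (Suc i)" using i unfolding l_def by (simp_all add: nth_append del: upt_Suc)
          moreover have "w i = w (Suc i) \<or> EH (w i) (w (Suc i))" using step[OF r'(1), of i] unfolding w_def by simp
          moreover have "w i \<in> F (Suc j)" "w (Suc i) \<in> F (Suc j)" using wF i by simp_all
          ultimately show "l ! i = l ! Suc i \<or> Ej (l ! i) (l ! Suc i)" unfolding Ej_def by auto
        qed
        moreover have "l \<noteq> []" unfolding l_def by simp
        ultimately obtain p where p: "distinct p" "successively Ej p" "p \<noteq> []" "hd p = hd l" "last p = last l" "set p \<subseteq> set l"
          using walk_to_path[of Ej l] by blast
        have "hd l = w 0" unfolding l_def by (simp del: upt_Suc add: hd_map)
        moreover have "last l = w t0" unfolding l_def by (simp del: upt_Suc add: last_map)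
        ultimately have "ab_path Ej (F 0) (-F j) p" using p A0[OF r'(1)] t0(1) unfolding ab_path_def is_path_def w_def by simp
        then have "set p \<inter> T \<noteq> {}" using T(2) unfolding separates_def by blast
        moreover have "set l \<inter> T = {}" using r'(2) unfolding l_def w_def by auto
        ultimately show False using p(6) by blast
      qed
    qed
    obtain PP where PP: "finite PP" "card PP = Suc k" "\<forall>p\<in>PP. ab_path Ej (F 0) (-F j) p" "disj_sys PP"
      using menger[OF finE irr finA sep] by blast
    obtain h where h: "bij_betw h {0..<card PP} PP" using ex_bij_betw_nat_finite[OF PP(1)] by blast
    have hin: "h t \<in> PP" if "t \<le> k" for t using h that PP(2) unfolding bij_betw_def by auto
    have "\<forall>t\<le>k. is_path EH (h t) \<and> hd (h t) \<in> F 0 \<and> set (h t) - F j \<noteq> {}"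
    proof (intro allI impI)
      fix t assume t: "t \<le> k"
      have ab: "ab_path Ej (F 0) (-F j) (h t)" using PP(3) hin[OF t] by blast
      have EjH: "\<And>u v. Ej u v \<Longrightarrow> EH u v" unfolding Ej_def by simp
      have "is_path Ej (h t)" using ab unfolding ab_path_def by simp
      then have "is_path EH (h t)" using is_path_mono[of Ej "h t" EH] EjH by blast
      moreover have "last (h t) \<in> set (h t)" using ab unfolding ab_path_def is_path_def by simp
      ultimately show "is_path EH (h t) \<and> hd (h t) \<in> F 0 \<and> set (h t) - F j \<noteq> {}"
        using ab unfolding ab_path_def by blast
    qed
    moreover have "\<forall>t t'. t \<le> k \<longrightarrow> t' \<le> k \<longrightarrow> t \<noteq> t' \<longrightarrow> set (h t) \<inter> set (h t') = {}"
    proof (intro allI impI)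
      fix t t' assume tt: "t \<le> k" "t' \<le> k" "t \<noteq> t'"
      have "h t \<noteq> h t'" using h tt PP(2) unfolding bij_betw_def inj_on_def by auto
      then show "set (h t) \<inter> set (h t') = {}" using PP(4) hin[OF tt(1)] hin[OF tt(2)] unfolding disj_sys_def by blast
    qed
    ultimately show ?thesis by blast
  qed
  have "\<forall>j. \<exists>P. (\<forall>t\<le>k. is_path EH (P t) \<and> hd (P t) \<in> F 0 \<and> set (P t) - F j \<noteq> {}) \<and>
              (\<forall>t t'. t \<le> k \<longrightarrow> t' \<le> k \<longrightarrow> t \<noteq> t' \<longrightarrow> set (P t) \<inter> set (P t') = {})"
    using sys by blast
  from choice[OF this] obtain P where P: "\<forall>j. (\<forall>t\<le>k. is_path EH (P j t) \<and> hd (P j t) \<in> F 0 \<and> set (P j t) - F j \<noteq> {}) \<and>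
              (\<forall>t t'. t \<le> k \<longrightarrow> t' \<le> k \<longrightarrow> t \<noteq> t' \<longrightarrow> set (P j t) \<inter> set (P j t') = {})"
    by blast
  have P1: "\<And>j t. t \<le> k \<Longrightarrow> is_path EH (P j t) \<and> hd (P j t) \<in> F 0 \<and> set (P j t) - F j \<noteq> {}"
    using P by blast
  have P2: "\<And>j t t'. t \<le> k \<Longrightarrow> t' \<le> k \<Longrightarrow> t \<noteq> t' \<Longrightarrow> set (P j t) \<inter> set (P j t') = {}"
    using P by blast
  obtain r where r: "\<forall>t\<le>k. inj (r t) \<and> (\<forall>n. EH (r t n) (r t (Suc n)))"
    "\<forall>t\<le>k. \<forall>t'\<le>k. t \<noteq> t' \<longrightarrow> range (r t) \<inter> range (r t') = {}"
    using rays_limit[of F EH k P, OF FS Ffin P1 P2] by blast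
  obtain r0 where r0: "\<alpha> = {s. ray VG EG s \<and> ray_equiv VG EG r0 s}" "ray VG EG r0"
    using a unfolding ends_def by blast
  have symG: "\<forall>a b. EG a b \<longrightarrow> EG b a" using graph_sym[OF gG] .
  have symE: "\<forall>a b. ?E a b \<longrightarrow> ?E b a" using cart_sym[OF gG gD] .
  have "r0 \<in> \<alpha>" using r0 ray_equiv_refl[OF symG r0(2)] by blast
  then have lr0: "(\<lambda>i. (r0 i, x0)) \<in> \<alpha>'" using sub by blast
  have inalpha: "r t \<in> \<alpha>" if t: "t \<le> k" for t
  proof -
    have ir: "inj (r t)" "\<forall>n. EH (r t n) (r t (Suc n))" using r(1) t by auto
    have ray: "ray VG EG (r t)" unfolding ray_def
    proof (intro conjI allI)
      show "inj (r t)" using ir(1) .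
      fix i
      show "EG (r t i) (r t (Suc i))" using ir(2) EHG by blast
      then show "r t i \<in> VG" using gG unfolding graph_def by blast
    qed
    have "ray_equiv VG EG r0 (r t)" unfolding ray_equiv_def
    proof (intro allI impI)
      fix S assume S: "finite S \<and> S \<subseteq> VG"
      have SV: "finite (S \<times> VD) \<and> S \<times> VD \<subseteq> ?V" using S fD unfolding cart_V_def by auto
      have ex: "\<exists>nm. \<forall>i\<ge>fst nm. \<forall>j\<ge>snd nm. conn_in EG (VG - S) (r0 i) (fst (r' j))" if r': "r' \<in> R'" for r'
      proof -
        have "ray_equiv ?V ?E (\<lambda>i. (r0 i, x0)) r'" using ends_equiv[OF symE a' lr0] R'(2) r' by blast
        then obtain n m where nm: "\<forall>i\<ge>n. \<forall>j\<ge>m. conn_in ?E (?V - S \<times> VD) (r0 i, x0) (r' j)"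
          using SV unfolding ray_equiv_def by meson
        have "\<forall>i\<ge>n. \<forall>j\<ge>m. conn_in EG (VG - S) (r0 i) (fst (r' j))"
        proof (intro allI impI)
          fix i j assume "n \<le> i" "m \<le> j"
          then have "conn_in ?E (?V - S \<times> VD) (r0 i, x0) (r' j)" using nm by simp
          from conn_project[OF this] show "conn_in EG (VG - S) (r0 i) (fst (r' j))" by simp
        qed
        then show ?thesis by (intro exI[of _ "(n, m)"]) simp
      qed
      have "\<forall>r'\<in>R'. \<exists>nm. \<forall>i\<ge>fst nm. \<forall>j\<ge>snd nm. conn_in EG (VG - S) (r0 i) (fst (r' j))"
        using ex by blast
      from bchoice[OF this] obtain nm where nm: "\<forall>r'\<in>R'. \<forall>i\<ge>fst (nm r'). \<forall>j\<ge>snd (nm r'). conn_in EG (VG - S) (r0 i) (fst (r' j))"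
        by blast
      define N where "N = (\<Sum>r'\<in>R'. fst (nm r'))"
      define M where "M = (\<Sum>r'\<in>R'. snd (nm r'))"
      have leN: "fst (nm r') \<le> N" and leM: "snd (nm r') \<le> M" if "r' \<in> R'" for r'
        unfolding N_def M_def using R'(1) that by (auto intro: member_le_sum)
      define Fs where "Fs = (\<lambda>(r', i). fst (r' i)) ` (R' \<times> {..<M})"
      have "finite Fs" unfolding Fs_def using R'(1) by simp
      then obtain K where K: "\<forall>n\<ge>K. r t n \<notin> Fs" using ray_finite_hits[OF ir(1)] by blast
      have "\<forall>i\<ge>N. \<forall>n\<ge>K. conn_in EG (VG - S) (r0 i) (r t n)"
      proof (intro allI impI)
        fix i n assume iN: "N \<le> i" and nK: "K \<le> n"
        have "EH (r t n) (r t (Suc n))" using ir(2) by blast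
        then obtain r' i0 where ri0: "r' \<in> R'" "(fst (r' i0) = r t n \<and> fst (r' (Suc i0)) = r t (Suc n)) \<or> (fst (r' i0) = r t (Suc n) \<and> fst (r' (Suc i0)) = r t n)"
          unfolding EH_def by meson
        then have "\<exists>i'. fst (r' i') = r t n" by blast
        then obtain i' where "fst (r' i') = r t n" by blast
        note ri = ri0(1) this
        have "r t n \<notin> Fs" using K nK by blast
        have "\<not> i' < M"
        proof
          assume "i' < M"
          then have "(\<lambda>(r', i). fst (r' i)) (r', i') \<in> Fs" unfolding Fs_def using ri(1) by (intro imageI) simp
          then have "r t n \<in> Fs" using ri(2) by simp
          then show False using \<open>r t n \<notin> Fs\<close> by simp
        qed
        then have "snd (nm r') \<le> i'" using leM[OF ri(1)] by simp
        moreover have "fst (nm r') \<le> i" using leN[OF ri(1)] iN by simp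
        ultimately have "conn_in EG (VG - S) (r0 i) (fst (r' i'))" using nm[rule_format, OF ri(1)] by blast
        then show "conn_in EG (VG - S) (r0 i) (r t n)" using ri(2) by simp
      qed
      then show "\<exists>n m. \<forall>i\<ge>n. \<forall>j\<ge>m. conn_in EG (VG - S) (r0 i) (r t j)" by blast
    qed
    then show ?thesis using r0(1) ray by blast
  qed
  define R where "R = r ` {..k}"
  have injr: "inj_on r {..k}"
  proof (rule inj_onI)
    fix t t' assume tt: "t \<in> {..k}" "t' \<in> {..k}" "r t = r t'"
    show "t = t'"
    proof (rule ccontr)
      assume "t \<noteq> t'"
      then have "range (r t) \<inter> range (r t') = {}" using r(2)[rule_format, of t t'] tt(1,2) by simp
      then show False using tt(3) by auto
    qed
  qed
  have "card R = Suc k" unfolding R_def using card_image[OF injr] by simp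
  moreover have "finite R" "R \<subseteq> \<alpha>" unfolding R_def using inalpha by auto
  moreover have "\<forall>s\<in>R. \<forall>s'\<in>R. s \<noteq> s' \<longrightarrow> range s \<inter> range s' = {}"
    unfolding R_def using r(2) by auto
  ultimately have "card R \<le> k" using bound[rule_format, of R] by blast
  then have "Suc k \<le> k" using \<open>card R = Suc k\<close> by simp
  then show False by simp
qed

theorem lemma19:
  fixes VG :: "'a set" and EG :: "'a \<Rightarrow> 'a \<Rightarrow> bool"
    and VD :: "'b set" and ED :: "'b \<Rightarrow> 'b \<Rightarrow> bool"
    and x0 :: 'b and \<alpha> :: "(nat \<Rightarrow> 'a) set" and \<alpha>' :: "(nat \<Rightarrow> 'a \<times> 'b) set"
  assumes "graph VG EG" and "infinite VG" and "locally_finite VG EG"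
    and "graph VD ED" and "finite VD" and "connected_graph VD ED"
    and "x0 \<in> VD"
    and "\<alpha> \<in> ends VG EG"
    and "\<alpha>' \<in> ends (cart_V VG VD) (cart_E EG ED)"
    and "(\<lambda>r i. (r i, x0)) ` \<alpha> \<subseteq> \<alpha>'"
  shows "end_degree \<alpha>' = end_degree \<alpha> * enat (card VD)"
proof -
  define Sys where "Sys \<beta> = {R. finite R \<and> R \<subseteq> \<beta> \<and> (\<forall>r\<in>R. \<forall>s\<in>R. r \<noteq> s \<longrightarrow> range r \<inter> range s = {})}"
    for \<beta> :: "(nat \<Rightarrow> 'a) set"
  define Sys' where "Sys' \<beta> = {R. finite R \<and> R \<subseteq> \<beta> \<and> (\<forall>r\<in>R. \<forall>s\<in>R. r \<noteq> s \<longrightarrow> range r \<inter> range s = {})}"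
    for \<beta> :: "(nat \<Rightarrow> 'a \<times> 'b) set"
  have dA: "end_degree \<alpha> = (SUP R\<in>Sys \<alpha>. enat (card R))" unfolding end_degree_def Sys_def ..
  have dA': "end_degree \<alpha>' = (SUP R\<in>Sys' \<alpha>'. enat (card R))" unfolding end_degree_def Sys'_def ..
  have n0: "card VD > 0" using assms(5,7) card_gt_0_iff by blast
  have L: "enat (card R * card VD) \<le> end_degree \<alpha>'" if "R \<in> Sys \<alpha>" for R
    using lower_bound[OF assms(1,4,6,5,7,8,9,10)] that unfolding Sys_def by blast
  have U: "end_degree \<alpha>' \<le> enat (k * card VD)" if b: "\<forall>R\<in>Sys \<alpha>. card R \<le> k" for k
    unfolding dA'
  proof (rule SUP_least)
    fix R' assume R': "R' \<in> Sys' \<alpha>'"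
    have b': "\<forall>R. finite R \<and> R \<subseteq> \<alpha> \<and> (\<forall>r\<in>R. \<forall>s\<in>R. r \<noteq> s \<longrightarrow> range r \<inter> range s = {}) \<longrightarrow> card R \<le> k"
      using b unfolding Sys_def by blast
    have r': "finite R'" "R' \<subseteq> \<alpha>'" "\<forall>r\<in>R'. \<forall>s\<in>R'. r \<noteq> s \<longrightarrow> range r \<inter> range s = {}"
      using R' unfolding Sys'_def by auto
    have "card R' \<le> k * card VD"
      using upper_bound[OF assms(1,4,5,7,8,9,10) b' r'] .
    then show "enat (card R') \<le> enat (k * card VD)" by simp
  qed
  have upA: "enat (card R) \<le> end_degree \<alpha>" if "R \<in> Sys \<alpha>" for R
    unfolding dA using that by (rule SUP_upper)
  have bnd: "end_degree \<alpha> \<le> enat m" if "\<forall>R\<in>Sys \<alpha>. card R \<le> m" for m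
    unfolding dA using that by (intro SUP_least) simp
  show ?thesis
  proof (cases "end_degree \<alpha>")
    case (enat k)
    have b: "\<forall>R\<in>Sys \<alpha>. card R \<le> k" using upA enat by fastforce
    have up: "end_degree \<alpha>' \<le> enat (k * card VD)" using U[OF b] .
    have lo: "enat (k * card VD) \<le> end_degree \<alpha>'"
    proof (cases "k = 0")
      case True then show ?thesis by (simp add: zero_enat_def[symmetric])
    next
      case False
      have "\<exists>R\<in>Sys \<alpha>. card R = k"
      proof (rule ccontr)
        assume "\<not> (\<exists>R\<in>Sys \<alpha>. card R = k)"
        then have "\<forall>R\<in>Sys \<alpha>. card R \<le> k - 1" using b by fastforce
        then have "end_degree \<alpha> \<le> enat (k - 1)" using bnd by blast
        then show False using enat False by simp
      qed
      then obtain R where "R \<in> Sys \<alpha>" "card R = k" by blast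
      then show ?thesis using L by fastforce
    qed
    show ?thesis using up lo enat by simp
  next
    case infinity
    have "end_degree \<alpha>' = \<infinity>"
    proof (rule ccontr)
      assume "end_degree \<alpha>' \<noteq> \<infinity>"
      then obtain m where m: "end_degree \<alpha>' = enat m" by (cases "end_degree \<alpha>'") auto
      have "\<exists>R\<in>Sys \<alpha>. m < card R"
      proof (rule ccontr)
        assume "\<not> (\<exists>R\<in>Sys \<alpha>. m < card R)"
        then have "\<forall>R\<in>Sys \<alpha>. card R \<le> m" by (simp add: not_less)
        then have "end_degree \<alpha> \<le> enat m" using bnd by blast
        then show False using infinity by simp
      qed
      then obtain R where R: "R \<in> Sys \<alpha>" "m < card R" by blast
      have "card R * card VD \<le> m" using L[OF R(1)] m by simp
      moreover have "card R \<le> card R * card VD" using n0 by simp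
      ultimately show False using R(2) by simp
    qed
    then show ?thesis using infinity n0 by simp
  qed
qed

end
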